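(* Let $g\ge 1$ be an integer. Then: (a) every shadow of genus $g$ over one backbone contains at least $2g$ and at most $6g-2$ arcs; in particular, for fixed $g$ there are only finitely many shadows of genus $g$ over one backbone; (b) for every integer $\ell$ with $2g\le \ell\le 6g-2$ there exists a shadow of genus $g$ over one backbone containing exactly $\ell$ arcs.
   Context: A diagram over $b$ backbones consists of the vertex set $[N]=\{1,\dots,N\}$, a partition of $[N]$ into $b$ backbones (maximal blocks of consecutive integers, ordered left to right), and a set of arcs $(i,j)$ with $i<j$, each vertex being incident to at most one arc. It is drawn with the vertices in increasing order on a horizontal line, each backbone as a segment joining its consecutive vertices, and the arcs in the upper half-plane. Two arcs $(i,j),(k,l)$ cross if $i<k<j<l$ or $k<i<l<j$. Genus: collapsing each backbone to a single vertex, the planar drawing determines a fatgraph (ribbon graph) with $b$ vertices and one edge per arc, hence an oriented surface with boundary; let $r$ be its number of boundary components (a backbone carrying no arcs contributes one boundary component). With $n$ the number of arcs, the genus $g$ is defined by $2-2g-r=b-n$ (for a connected diagram this is the genus of the associated surface). A stack is a maximal collection of arcs of the form $(i,j),(i+1,j-1),\dots,(i+\ell-1,j-\ell+1)$; its size is $\ell$. An arc is non-crossing if no other arc of the diagram crosses it; a vertex is isolated if no arc is incident to it. A shadow is a diagram with no non-crossing arcs and no isolated vertices in which every stack has size one. *)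

theory Defs
  imports Main
begin

definition diagram1 :: "nat \<Rightarrow> (nat \<times> nat) set \<Rightarrow> bool" where
  "diagram1 N A \<longleftrightarrow> 1 \<le> N \<and>
     (\<forall>(i,j)\<in>A. 1 \<le> i \<and> i < j \<and> j \<le> N) \<and>
     (\<forall>a\<in>A. \<forall>b\<in>A. a \<noteq> b \<longrightarrow>
        {fst a, snd a} \<inter> {fst b, snd b} = {})"

definition crosses :: "nat \<times> nat \<Rightarrow> nat \<times> nat \<Rightarrow> bool" where
  "crosses a b \<longleftrightarrow> (case a of (i,j) \<Rightarrow> case b of (k,l) \<Rightarrow>
      (i < k \<and> k < j \<and> j < l) \<or> (k < i \<and> i < l \<and> l < j))"

definition incident :: "(nat \<times> nat) set \<Rightarrow> nat \<Rightarrow> bool" where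
  "incident A v \<longleftrightarrow> (\<exists>(i,j)\<in>A. v = i \<or> v = j)"

text \<open>Shadow: no non-crossing arcs, no isolated vertices, all stacks of size one
(i.e. no two arcs (i,j),(i+1,j-1) both present).\<close>

definition shadow1 :: "nat \<Rightarrow> (nat \<times> nat) set \<Rightarrow> bool" where
  "shadow1 N A \<longleftrightarrow> diagram1 N A \<and>
     (\<forall>a\<in>A. \<exists>b\<in>A. crosses a b) \<and>
     (\<forall>v\<in>{1..N}. incident A v) \<and>
     (\<forall>(i,j)\<in>A. (i+1, j-1) \<notin> A)"

text \<open>Fatgraph of a one-backbone diagram: backbone cycle gamma and arc
involution sigma (fixing isolated vertices); boundary components are the
cycles of gamma \<circ> sigma on {1..N}.\<close>

definition backbone_perm :: "nat \<Rightarrow> nat \<Rightarrow> nat" where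
  "backbone_perm N v = (if v \<in> {1..<N} then v + 1 else if v = N then 1 else v)"

definition arc_perm :: "(nat \<times> nat) set \<Rightarrow> nat \<Rightarrow> nat" where
  "arc_perm A v = (if \<exists>w. (v,w) \<in> A then (THE w. (v,w) \<in> A)
                   else if \<exists>w. (w,v) \<in> A then (THE w. (w,v) \<in> A) else v)"

definition orbit_of :: "(nat \<Rightarrow> nat) \<Rightarrow> nat \<Rightarrow> nat set" where
  "orbit_of p v = {(p ^^ k) v | k. True}"

definition boundary_components :: "nat \<Rightarrow> (nat \<times> nat) set \<Rightarrow> nat" where
  "boundary_components N A =
     card ((\<lambda>v. orbit_of (backbone_perm N \<circ> arc_perm A) v) ` {1..N})"

text \<open>Genus g defined by 2 - 2g - r = b - n with b = 1, n = number of arcs.\<close>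

definition has_genus :: "nat \<Rightarrow> (nat \<times> nat) set \<Rightarrow> nat \<Rightarrow> bool" where
  "has_genus N A g \<longleftrightarrow>
     2 - 2 * int g - int (boundary_components N A) = 1 - int (card A)"

end

theory Submission
  imports Defs
begin


section \<open>Generic orbit facts\<close>

lemma funpow_period: "(f^^n) x = x \<Longrightarrow> (f^^(q*n)) x = x"
  by (induction q) (simp_all add: funpow_add)

lemma funpow_mod: assumes "(f^^n) x = x" shows "(f^^k) x = (f^^(k mod n)) x"
proof -
  have "k = k mod n + (k div n) * n" by simp
  then have "(f^^k) x = (f^^(k mod n)) ((f^^((k div n) * n)) x)"
    by (metis comp_apply funpow_add)
  also have "\<dots> = (f^^(k mod n)) x" using funpow_period[OF assms] by simp
  finally show ?thesis .
qed

lemma orbit_periodic: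
  assumes "(f^^n) x = x" "n > 0"
  shows "orbit_of f x = {(f^^k) x | k. k < n}"
proof
  show "orbit_of f x \<subseteq> {(f^^k) x | k. k < n}"
  proof
    fix y assume "y \<in> orbit_of f x"
    then obtain k where "y = (f^^k) x" unfolding orbit_of_def by auto
    then have "y = (f^^(k mod n)) x" using funpow_mod[OF assms(1)] by simp
    then show "y \<in> {(f^^k) x | k. k < n}" using assms(2) by auto
  qed
qed (auto simp: orbit_of_def)

lemma in_orbit_self: "x \<in> orbit_of f x"
  unfolding orbit_of_def by (auto intro: exI[of _ 0])

lemma orbit_step: assumes "y \<in> orbit_of f x" shows "f y \<in> orbit_of f x"
proof -
  obtain k where "y = (f^^k) x" using assms unfolding orbit_of_def by auto
  then have "f y = (f^^(Suc k)) x" by simp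
  then show ?thesis unfolding orbit_of_def by blast
qed

lemma orbit_same:
  assumes "(f^^n) x = x" "n > 0" "y \<in> orbit_of f x"
  shows "orbit_of f y = orbit_of f x"
proof -
  obtain a where a: "y = (f^^a) x" using assms(3) unfolding orbit_of_def by auto
  have "orbit_of f y \<subseteq> orbit_of f x"
  proof
    fix z assume "z \<in> orbit_of f y"
    then obtain k where "z = (f^^k) y" unfolding orbit_of_def by auto
    then have "z = (f^^(k+a)) x" using a by (simp add: funpow_add)
    then show "z \<in> orbit_of f x" unfolding orbit_of_def by auto
  qed
  moreover have "orbit_of f x \<subseteq> orbit_of f y"
  proof
    fix z assume "z \<in> orbit_of f x"
    then obtain k where k: "z = (f^^k) x" unfolding orbit_of_def by auto
    have "a \<le> a * n" using assms(2) by simp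
    then have e: "k + a * n - a + a = k + a * n" by arith
    have "(f^^(k + a*n - a)) y = (f^^(k + a*n - a + a)) x" using a by (simp add: funpow_add)
    also have "\<dots> = (f^^k) ((f^^(a*n)) x)" unfolding e by (simp add: funpow_add)
    also have "\<dots> = z" using funpow_period[OF assms(1)] k by simp
    finally show "z \<in> orbit_of f y" unfolding orbit_of_def by (auto intro!: exI[of _ "k + a*n - a"])
  qed
  ultimately show ?thesis by blast
qed

lemma periodic_in_orbit:
  assumes "(f^^n) x = x" "y \<in> orbit_of f x"
  shows "(f^^n) y = y"
proof -
  obtain a where a: "y = (f^^a) x" using assms(2) unfolding orbit_of_def by auto
  have "(f^^n) y = (f^^(n + a)) x" using a by (simp add: funpow_add)
  also have "\<dots> = (f^^a) ((f^^n) x)" by (simp add: funpow_add add.commute)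
  finally show ?thesis using assms(1) a by simp
qed

lemma funpow_in: "\<forall>x\<in>S. f x \<in> S \<Longrightarrow> x \<in> S \<Longrightarrow> (f^^k) x \<in> S"
  by (induction k) auto

lemma funpow_inj_cancel:
  assumes "\<forall>x\<in>S. f x \<in> S" "inj_on f S" "a \<in> S" "b \<in> S" "(f^^i) a = (f^^i) b"
  shows "a = b"
  using assms(5)
proof (induction i)
  case (Suc i)
  then have "f ((f^^i) a) = f ((f^^i) b)" by simp
  then have "(f^^i) a = (f^^i) b"
    using assms(2) funpow_in[OF assms(1) assms(3)] funpow_in[OF assms(1) assms(4)]
    by (meson inj_onD)
  then show ?case using Suc by simp
qed simp

lemma periodic_exists:
  assumes fin: "finite S" and maps: "\<forall>x\<in>S. f x \<in> S" and inj: "inj_on f S" and x: "x \<in> S"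
  shows "\<exists>n>0. (f^^n) x = x"
proof -
  let ?g = "\<lambda>k. (f^^k) x"
  have "\<not> inj_on ?g {..card S}"
  proof
    assume "inj_on ?g {..card S}"
    moreover have "?g ` {..card S} \<subseteq> S" using funpow_in[OF maps x] by auto
    ultimately have "card {..card S} \<le> card S" using card_inj_on_le fin by blast
    then show False by simp
  qed
  then obtain i j where ij: "i \<noteq> j" "?g i = ?g j"
    unfolding inj_on_def by blast
  then have "\<exists>i j. i < j \<and> ?g i = ?g j"
  proof (cases "i < j")
    case True then show ?thesis using ij by blast
  next
    case False then have "j < i" using ij(1) by simp
    then show ?thesis using ij(2) by metis
  qed
  then obtain i j where ij: "i < j" "?g i = ?g j" by blast
  have jj: "j = i + (j - i)" using ij(1) by simp
  have "(f^^i) ((f^^(j-i)) x) = (f^^j) x"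
    by (subst (2) jj) (simp add: funpow_add)
  then have "(f^^i) x = (f^^i) ((f^^(j-i)) x)" using ij(2) by simp
  then have "(f^^(j-i)) x = x"
    using funpow_inj_cancel[OF maps inj x funpow_in[OF maps x]] by metis
  then show ?thesis using ij(1) by (intro exI[of _ "j-i"]) auto
qed

lemma orbit_subset: assumes "\<forall>x\<in>S. f x \<in> S" "x \<in> S" shows "orbit_of f x \<subseteq> S"
proof
  fix y assume "y \<in> orbit_of f x"
  then obtain k where "y = (f^^k) x" unfolding orbit_of_def by auto
  then show "y \<in> S" using funpow_in[OF assms] by simp
qed

lemma orbits_disjoint:
  assumes fin: "finite S" and maps: "\<forall>x\<in>S. f x \<in> S" and inj: "inj_on f S"
    and "x \<in> S" "y \<in> S" "z \<in> orbit_of f x" "z \<in> orbit_of f y"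
  shows "orbit_of f x = orbit_of f y"
proof -
  obtain n where n: "n > 0" "(f^^n) x = x" using periodic_exists[OF fin maps inj assms(4)] by blast
  obtain m where m: "m > 0" "(f^^m) y = y" using periodic_exists[OF fin maps inj assms(5)] by blast
  show ?thesis using orbit_same[OF n(2) n(1) assms(6)] orbit_same[OF m(2) m(1) assms(7)] by simp
qed

lemma orbit_sum:
  assumes fin: "finite S" and maps: "\<forall>x\<in>S. f x \<in> S" and inj: "inj_on f S"
  shows "card S = (\<Sum>B\<in>orbit_of f ` S. card B)"
proof -
  have U: "\<Union>(orbit_of f ` S) = S"
  proof
    show "\<Union>(orbit_of f ` S) \<subseteq> S"
    proof
      fix z assume "z \<in> \<Union>(orbit_of f ` S)"
      then obtain x where "x \<in> S" "z \<in> orbit_of f x" by auto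
      then show "z \<in> S" using orbit_subset[OF maps \<open>x \<in> S\<close>] by auto
    qed
    show "S \<subseteq> \<Union>(orbit_of f ` S)" using in_orbit_self by fast
  qed
  have "pairwise disjnt (orbit_of f ` S)"
  proof (rule pairwiseI)
    fix A B assume "A \<in> orbit_of f ` S" "B \<in> orbit_of f ` S" "A \<noteq> B"
    then obtain x y where xy: "x \<in> S" "y \<in> S" "A = orbit_of f x" "B = orbit_of f y" by blast
    show "disjnt A B" unfolding disjnt_def
    proof (rule equals0I)
      fix z assume "z \<in> A \<inter> B"
      then have "z \<in> A" "z \<in> B" by auto
      then have "A = B" using orbits_disjoint[OF fin maps inj xy(1,2)] xy(3,4) by metis
      then show False using \<open>A \<noteq> B\<close> by simp
    qed
  qed
  moreover have "\<And>B. B \<in> orbit_of f ` S \<Longrightarrow> finite B"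
  proof -
    fix B assume "B \<in> orbit_of f ` S"
    then obtain x where "x \<in> S" "B = orbit_of f x" by auto
    then show "finite B" using finite_subset[OF orbit_subset[OF maps \<open>x \<in> S\<close>] fin] by simp
  qed
  ultimately have "card (\<Union>(orbit_of f ` S)) = sum card (orbit_of f ` S)"
    by (rule card_Union_disjoint)
  then show ?thesis using U by simp
qed

lemma orbit_card3:
  assumes "(f^^3) x = x" "f x \<noteq> x"
  shows "card (orbit_of f x) = 3"
proof -
  have o: "orbit_of f x = {(f^^k) x | k. k < 3}" using orbit_periodic[OF assms(1)] by simp
  have "{(f^^k) x | k. k < (3::nat)} \<subseteq> {x, f x, f (f x)}"
    by (auto simp: numeral_3_eq_3 less_Suc_eq)
  moreover have "x \<in> {(f^^k) x | k. k < (3::nat)}" by (rule CollectI, rule exI[of _ 0]) simp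
  moreover have "f x \<in> {(f^^k) x | k. k < (3::nat)}" by (rule CollectI, rule exI[of _ 1]) simp
  moreover have "f (f x) \<in> {(f^^k) x | k. k < (3::nat)}"
    by (rule CollectI, rule exI[of _ 2]) (simp add: numeral_2_eq_2)
  ultimately have e: "{(f^^k) x | k. k < (3::nat)} = {x, f x, f (f x)}" by (intro equalityI) auto
  have n1: "f (f x) \<noteq> x"
  proof
    assume "f (f x) = x" then have "(f^^3) x = f x" by (simp add: numeral_3_eq_3)
    then show False using assms by simp
  qed
  have n2: "f (f x) \<noteq> f x"
  proof
    assume h: "f (f x) = f x" then have "(f^^3) x = f x" by (simp add: numeral_3_eq_3)
    then show False using assms by simp
  qed
  show ?thesis unfolding o e using n1 n2 assms(2) by simp
qed


definition perfect :: "nat \<Rightarrow> (nat \<times> nat) set \<Rightarrow> bool" where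
  "perfect N A \<longleftrightarrow> diagram1 N A \<and> (\<forall>v\<in>{1..N}. incident A v)"

definition bp :: "nat \<Rightarrow> (nat \<times> nat) set \<Rightarrow> nat \<Rightarrow> nat" where
  "bp N A = backbone_perm N \<circ> arc_perm A"

lemma diagram_arcD:
  assumes "diagram1 N A" "(i,j) \<in> A"
  shows "1 \<le> i" "i < j" "j \<le> N"
  using assms unfolding diagram1_def by auto

lemma diagram_disj:
  assumes "diagram1 N A" "a \<in> A" "b \<in> A" "a \<noteq> b"
  shows "{fst a, snd a} \<inter> {fst b, snd b} = {}"
  using assms unfolding diagram1_def by blast

lemma arc_perm_arc:
  assumes d: "diagram1 N A" and ij: "(i,j) \<in> A"
  shows "arc_perm A i = j" "arc_perm A j = i"
proof -
  have u1: "w = j" if "(i,w) \<in> A" for w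
  proof (rule ccontr)
    assume "w \<noteq> j"
    then have "(i,w) \<noteq> (i,j)" by simp
    then have "{i, w} \<inter> {i, j} = {}" using diagram_disj[OF d that ij] by simp
    then show False by simp
  qed
  have "(THE w. (i,w) \<in> A) = j" using u1 ij by blast
  then show "arc_perm A i = j" unfolding arc_perm_def using ij by auto
  have n1: "\<not> (\<exists>w. (j,w) \<in> A)"
  proof
    assume "\<exists>w. (j,w) \<in> A"
    then obtain w where w: "(j,w) \<in> A" by blast
    have "i < j" using diagram_arcD[OF d ij] by simp
    then have "(j,w) \<noteq> (i,j)" by simp
    then have "{j, w} \<inter> {i, j} = {}" using diagram_disj[OF d w ij] by simp
    then show False by simp
  qed
  have u2: "w = i" if "(w,j) \<in> A" for w
  proof (rule ccontr)
    assume "w \<noteq> i"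
    then have "(w,j) \<noteq> (i,j)" by simp
    then have "{w, j} \<inter> {i, j} = {}" using diagram_disj[OF d that ij] by simp
    then show False by simp
  qed
  have "(THE w. (w,j) \<in> A) = i" using u2 ij by blast
  then show "arc_perm A j = i" unfolding arc_perm_def using ij n1 by auto
qed

lemma perfect_cases:
  assumes p: "perfect N A" and v: "v \<in> {1..N}"
  shows "(v, arc_perm A v) \<in> A \<or> (arc_perm A v, v) \<in> A"
proof -
  have "incident A v" using p v unfolding perfect_def by auto
  then obtain i j where ij: "(i,j) \<in> A" "v = i \<or> v = j" unfolding incident_def by auto
  have d: "diagram1 N A" using p unfolding perfect_def by simp
  show ?thesis using ij arc_perm_arc[OF d ij(1)] by auto
qed

lemma perfect_ap:
  assumes p: "perfect N A" and v: "v \<in> {1..N}"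
  shows "arc_perm A v \<in> {1..N}" "arc_perm A (arc_perm A v) = v" "arc_perm A v \<noteq> v"
proof -
  have d: "diagram1 N A" using p unfolding perfect_def by simp
  have "arc_perm A v \<in> {1..N} \<and> arc_perm A (arc_perm A v) = v \<and> arc_perm A v \<noteq> v"
    using perfect_cases[OF p v]
  proof
    assume h: "(v, arc_perm A v) \<in> A"
    show ?thesis using diagram_arcD[OF d h] arc_perm_arc[OF d h] by auto
  next
    assume h: "(arc_perm A v, v) \<in> A"
    show ?thesis using diagram_arcD[OF d h] arc_perm_arc[OF d h] by auto
  qed
  then show "arc_perm A v \<in> {1..N}" "arc_perm A (arc_perm A v) = v" "arc_perm A v \<noteq> v" by auto
qed

lemma backbone_in: "v \<in> {1..N} \<Longrightarrow> backbone_perm N v \<in> {1..N}"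
  unfolding backbone_perm_def by auto

lemma backbone_inj: "inj_on (backbone_perm N) {1..N}"
  unfolding backbone_perm_def inj_on_def by auto

lemma bp_maps: "perfect N A \<Longrightarrow> \<forall>v\<in>{1..N}. bp N A v \<in> {1..N}"
  unfolding bp_def using perfect_ap(1) backbone_in by simp

lemma bp_inj: assumes "perfect N A" shows "inj_on (bp N A) {1..N}"
proof (rule inj_onI)
  fix x y assume x: "x \<in> {1..N}" and y: "y \<in> {1..N}" and e: "bp N A x = bp N A y"
  have "backbone_perm N (arc_perm A x) = backbone_perm N (arc_perm A y)" using e unfolding bp_def by simp
  then have "arc_perm A x = arc_perm A y"
    by (rule inj_onD[OF backbone_inj]) (use perfect_ap(1)[OF assms x] perfect_ap(1)[OF assms y] in auto)
  then show "x = y" using perfect_ap(2)[OF assms x] perfect_ap(2)[OF assms y] by metis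
qed

lemma boundary_bp: "boundary_components N A = card (orbit_of (bp N A) ` {1..N})"
  unfolding boundary_components_def bp_def by simp

lemma perfect_orbit_sum:
  assumes "perfect N A"
  shows "N = (\<Sum>B\<in>orbit_of (bp N A) ` {1..N}. card B)"
  using orbit_sum[OF _ bp_maps[OF assms] bp_inj[OF assms]] by simp

lemma perfect_card:
  assumes p: "perfect N A"
  shows "N = 2 * card A" and "finite A"
proof -
  have d: "diagram1 N A" using p unfolding perfect_def by simp
  have sub: "A \<subseteq> {1..N} \<times> {1..N}"
  proof
    fix a assume "a \<in> A"
    then obtain i j where "a = (i,j)" "(i,j) \<in> A" by (cases a) auto
    then show "a \<in> {1..N} \<times> {1..N}" using diagram_arcD[OF d] by fastforce
  qed
  then show fA: "finite A" using finite_subset by blast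
  have U: "(\<Union>a\<in>A. {fst a, snd a}) = {1..N}"
  proof
    show "(\<Union>a\<in>A. {fst a, snd a}) \<subseteq> {1..N}" using sub by auto
    show "{1..N} \<subseteq> (\<Union>a\<in>A. {fst a, snd a})"
    proof
      fix v assume "v \<in> {1..N}"
      then have "incident A v" using p unfolding perfect_def by auto
      then obtain i j where "(i,j) \<in> A" "v = i \<or> v = j" unfolding incident_def by auto
      then show "v \<in> (\<Union>a\<in>A. {fst a, snd a})" by force
    qed
  qed
  have "card (\<Union>a\<in>A. {fst a, snd a}) = (\<Sum>a\<in>A. card {fst a, snd a})"
    by (rule card_UN_disjoint) (use fA diagram_disj[OF d] in auto)
  also have "\<dots> = (\<Sum>a\<in>A. 2)"
  proof (rule sum.cong)
    fix a assume "a \<in> A"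
    then obtain i j where "a = (i,j)" "(i,j) \<in> A" by (cases a) auto
    then show "card {fst a, snd a} = 2" using diagram_arcD(2)[OF d] by fastforce
  qed simp
  finally show "N = 2 * card A" using U by simp
qed

lemma shadow_perfect: "shadow1 N A \<Longrightarrow> perfect N A"
  unfolding shadow1_def perfect_def by auto


section \<open>Part (a)\<close>

lemma shadow_crossD:
  assumes "shadow1 N A" "(i,j) \<in> A"
  shows "\<exists>k l. (k,l) \<in> A \<and> ((i < k \<and> k < j \<and> j < l) \<or> (k < i \<and> i < l \<and> l < j))"
proof -
  obtain b where b: "b \<in> A" "crosses (i,j) b" using assms unfolding shadow1_def by blast
  obtain k l where "b = (k,l)" by (cases b)
  then show ?thesis using b unfolding crosses_def by auto
qed

lemma shadow_stackD:
  assumes "shadow1 N A" "(i,j) \<in> A"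
  shows "(i+1, j-1) \<notin> A"
  using assms unfolding shadow1_def by auto

lemma orient1:
  assumes p: "perfect N A" and x: "x \<in> {1..N}" and lt: "x < arc_perm A x"
  shows "(x, arc_perm A x) \<in> A"
proof -
  have d: "diagram1 N A" using p unfolding perfect_def by simp
  show ?thesis using perfect_cases[OF p x] diagram_arcD(2)[OF d] lt by fastforce
qed

lemma orient2:
  assumes p: "perfect N A" and x: "x \<in> {1..N}" and lt: "arc_perm A x < x"
  shows "(arc_perm A x, x) \<in> A"
proof -
  have d: "diagram1 N A" using p unfolding perfect_def by simp
  show ?thesis using perfect_cases[OF p x] diagram_arcD(2)[OF d] lt by fastforce
qed

lemma no_fix:
  assumes sh: "shadow1 N A" and v: "v \<in> {1..N}"
  shows "bp N A v \<noteq> v"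
proof
  assume e: "bp N A v = v"
  have p: "perfect N A" using sh by (rule shadow_perfect)
  let ?w = "arc_perm A v"
  have w: "?w \<in> {1..N}" "?w \<noteq> v" using perfect_ap[OF p v] by auto
  have e2: "backbone_perm N ?w = v" using e unfolding bp_def by simp
  show False
  proof (cases "?w < N")
    case True
    then have "?w + 1 = v" using e2 w(1) unfolding backbone_perm_def by auto
    then have "(?w, v) \<in> A" using orient2[OF p v] by simp
    then obtain k l where "(k,l) \<in> A" "(?w < k \<and> k < v \<and> v < l) \<or> (k < ?w \<and> ?w < l \<and> l < v)"
      using shadow_crossD[OF sh] by blast
    then show False using \<open>?w + 1 = v\<close> by auto
  next
    case False
    then have wN: "?w = N" using w(1) by auto
    then have "v = 1" using e2 unfolding backbone_perm_def by auto
    have "1 < N" using w wN \<open>v = 1\<close> by auto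
    then have "(1, N) \<in> A" using orient1[OF p v] wN \<open>v = 1\<close> by simp
    then obtain k l where kl: "(k,l) \<in> A" "(1 < k \<and> k < N \<and> N < l) \<or> (k < 1 \<and> 1 < l \<and> l < N)"
      using shadow_crossD[OF sh] by blast
    have d: "diagram1 N A" using p unfolding perfect_def by simp
    show False using kl diagram_arcD[OF d kl(1)] by auto
  qed
qed

lemma bb_pred:
  assumes "a \<in> {1..N}" "backbone_perm N a = w" "w \<noteq> 1"
  shows "a < N" "a = w - 1"
  using assms unfolding backbone_perm_def by (auto split: if_splits)

lemma two_cycle:
  assumes sh: "shadow1 N A" and v: "v \<in> {1..N}" and e: "bp N A (bp N A v) = v"
  shows "v = 1 \<or> bp N A v = 1"
proof (rule ccontr)
  assume nn: "\<not> (v = 1 \<or> bp N A v = 1)"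
  have p: "perfect N A" using sh by (rule shadow_perfect)
  let ?p = "bp N A" and ?s = "arc_perm A"
  let ?w = "?p v"
  have w: "?w \<in> {1..N}" using bp_maps[OF p] v by blast
  have wv: "?w \<noteq> v" using no_fix[OF sh v] .
  have s1: "?s v \<in> {1..N}" using perfect_ap[OF p v] by auto
  have s2: "?s ?w \<in> {1..N}" using perfect_ap[OF p w] by auto
  have a1: "?s v = ?w - 1" using bb_pred[OF s1, of ?w] nn unfolding bp_def by auto
  have a2: "?s ?w = v - 1" using bb_pred[OF s2, of v] nn e unfolding bp_def by auto
  have sv: "?s v \<noteq> v" "?s ?w \<noteq> ?w" using perfect_ap[OF p v] perfect_ap[OF p w] by auto
  have vge: "v \<ge> 2" "?w \<ge> 2" using nn v w by auto
  show False
  proof (cases "v < ?w")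
    case True
    then have "v < ?s v" using a1 sv by auto
    then have i1: "(v, ?w - 1) \<in> A" using orient1[OF p v] a1 by simp
    have "?s ?w < ?w" using a2 True by auto
    then have i2: "(v - 1, ?w) \<in> A" using orient2[OF p w] a2 by simp
    have "(v - 1 + 1, ?w - 1) \<notin> A" using shadow_stackD[OF sh i2] .
    then show False using i1 vge by simp
  next
    case False
    then have lt: "?w < v" using wv by simp
    then have "?w < ?s ?w" using a2 sv by auto
    then have i1: "(?w, v - 1) \<in> A" using orient1[OF p w] a2 by simp
    have "?s v < v" using a1 lt by auto
    then have i2: "(?w - 1, v) \<in> A" using orient2[OF p v] a1 by simp
    have "(?w - 1 + 1, v - 1) \<notin> A" using shadow_stackD[OF sh i2] .
    then show False using i1 vge by simp
  qed
qed

lemma finite_orbit: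
  assumes "perfect N A" "v \<in> {1..N}"
  shows "finite (orbit_of (bp N A) v)"
  using finite_subset[OF orbit_subset[OF bp_maps[OF assms(1)] assms(2)]] by simp

lemma orbit_card_ge:
  assumes sh: "shadow1 N A" and v: "v \<in> {1..N}"
  shows "card (orbit_of (bp N A) v) \<ge> (if 1 \<in> orbit_of (bp N A) v then 2 else 3)"
proof -
  have p: "perfect N A" using sh by (rule shadow_perfect)
  let ?p = "bp N A"
  let ?B = "orbit_of ?p v"
  have fin: "finite ?B" using finite_orbit[OF p v] .
  have m1: "v \<in> ?B" by (rule in_orbit_self)
  have m2: "?p v \<in> ?B" by (rule orbit_step[OF m1])
  have m3: "?p (?p v) \<in> ?B" by (rule orbit_step[OF m2])
  have w: "?p v \<in> {1..N}" using bp_maps[OF p] v by blast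
  have d1: "?p v \<noteq> v" using no_fix[OF sh v] .
  have d2: "?p (?p v) \<noteq> ?p v" using no_fix[OF sh w] .
  have c2: "card {v, ?p v} \<le> card ?B" using fin m1 m2 by (intro card_mono) auto
  show ?thesis
  proof (cases "1 \<in> ?B")
    case True then show ?thesis using c2 d1 by simp
  next
    case False
    have d3: "?p (?p v) \<noteq> v" using two_cycle[OF sh v] False m1 m2 by auto
    have "card {v, ?p v, ?p (?p v)} \<le> card ?B" using fin m1 m2 m3 by (intro card_mono) auto
    then show ?thesis using False d1 d2 d3 by simp
  qed
qed

lemma part_a_bound:
  assumes sh: "shadow1 N A"
  shows "3 * boundary_components N A \<le> N + 1" "boundary_components N A \<ge> 1"
proof -
  have p: "perfect N A" using sh by (rule shadow_perfect)
  have N1: "1 \<le> N" using p unfolding perfect_def diagram1_def by simp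
  let ?p = "bp N A"
  let ?R = "orbit_of ?p ` {1..N}"
  let ?E = "orbit_of ?p 1"
  have E: "?E \<in> ?R" using N1 by auto
  have finR: "finite ?R" by simp
  have sumN: "N = (\<Sum>B\<in>?R. card B)" using perfect_orbit_sum[OF p] .
  have "(\<Sum>B\<in>?R. card B) = card ?E + (\<Sum>B\<in>?R - {?E}. card B)"
    using E finR by (simp add: sum.remove)
  moreover have "card ?E \<ge> 2"
    using orbit_card_ge[OF sh, of 1] N1 in_orbit_self[of 1 ?p] by auto
  moreover have "(\<Sum>B\<in>?R - {?E}. card B) \<ge> (\<Sum>B\<in>?R - {?E}. 3)"
  proof (rule sum_mono)
    fix B assume B: "B \<in> ?R - {?E}"
    then have B1: "B \<in> ?R" and B2: "B \<noteq> ?E" by auto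
    from B1 obtain v where v: "v \<in> {1..N}" "B = orbit_of ?p v" by (rule imageE) simp
    have "1 \<notin> B"
    proof
      assume "1 \<in> B"
      then have "orbit_of ?p v = ?E"
        using orbits_disjoint[OF _ bp_maps[OF p] bp_inj[OF p] v(1), of 1 1] N1 v(2) in_orbit_self[of 1 ?p]
        by auto
      then show False using B2 v by simp
    qed
    then show "card B \<ge> 3" using orbit_card_ge[OF sh v(1)] v(2) by simp
  qed
  moreover have "(\<Sum>B\<in>?R - {?E}. (3::nat)) = 3 * (card ?R - 1)"
    using E finR by simp
  ultimately have "N \<ge> 2 + 3 * (card ?R - 1)" using sumN by linarith
  moreover have "card ?R \<ge> 1"
  proof -
    have "?R \<noteq> {}" using E by blast
    then have "0 < card ?R" using finR card_gt_0_iff by blast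
    then show ?thesis by simp
  qed
  ultimately show "3 * boundary_components N A \<le> N + 1" "boundary_components N A \<ge> 1"
    unfolding boundary_bp by auto
qed

lemma part_a:
  assumes sh: "shadow1 N A" and g: "has_genus N A g"
  shows "2 * g \<le> card A" "card A \<le> 6 * g - 2" "N = 2 * card A"
proof -
  have p: "perfect N A" using sh by (rule shadow_perfect)
  have N: "N = 2 * card A" using perfect_card[OF p] by simp
  have b: "3 * boundary_components N A \<le> N + 1" "boundary_components N A \<ge> 1"
    using part_a_bound[OF sh] by auto
  have e: "2 - 2 * int g - int (boundary_components N A) = 1 - int (card A)"
    using g unfolding has_genus_def by simp
  show "2 * g \<le> card A" using e b by linarith
  show "card A \<le> 6 * g - 2" using e b N by linarith
  show "N = 2 * card A" by (rule N)
qed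


section \<open>Concatenation\<close>

definition shiftA :: "nat \<Rightarrow> (nat \<times> nat) set \<Rightarrow> (nat \<times> nat) set" where
  "shiftA k A = (\<lambda>(i,j). (i+k, j+k)) ` A"

definition cat :: "nat \<Rightarrow> (nat \<times> nat) set \<Rightarrow> (nat \<times> nat) set \<Rightarrow> (nat \<times> nat) set" where
  "cat N1 A1 A2 = A1 \<union> shiftA N1 A2"

lemma shiftA_mem: "(i,j) \<in> shiftA k A \<longleftrightarrow> k \<le> i \<and> k \<le> j \<and> (i-k, j-k) \<in> A"
  unfolding shiftA_def by force

lemma shiftA_mem2: "(i+k, j+k) \<in> shiftA k A \<longleftrightarrow> (i, j) \<in> A"
  unfolding shiftA_mem by simp

lemma cat_diagram:
  assumes d1: "diagram1 N1 A1" and d2: "diagram1 N2 A2"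
  shows "diagram1 (N1+N2) (cat N1 A1 A2)"
proof -
  have r1: "\<forall>(i,j)\<in>A1. 1 \<le> i \<and> i < j \<and> j \<le> N1" using d1 unfolding diagram1_def by simp
  have r2: "\<forall>(i,j)\<in>A2. 1 \<le> i \<and> i < j \<and> j \<le> N2" using d2 unfolding diagram1_def by simp
  have rng: "\<forall>(i,j)\<in>cat N1 A1 A2. 1 \<le> i \<and> i < j \<and> j \<le> N1+N2"
    using r1 r2 unfolding cat_def shiftA_def by fastforce
  have dj: "\<forall>a\<in>cat N1 A1 A2. \<forall>b\<in>cat N1 A1 A2. a \<noteq> b \<longrightarrow> {fst a, snd a} \<inter> {fst b, snd b} = {}"
  proof (intro ballI impI)
    fix a b assume a: "a \<in> cat N1 A1 A2" and b: "b \<in> cat N1 A1 A2" and ab: "a \<noteq> b"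
    show "{fst a, snd a} \<inter> {fst b, snd b} = {}"
    proof (cases "a \<in> A1")
      case aA: True
      show ?thesis
      proof (cases "b \<in> A1")
        case True then show ?thesis using diagram_disj[OF d1 aA _ ab] by simp
      next
        case False
        then obtain i j where "(i,j) \<in> A2" "b = (i+N1, j+N1)" using b unfolding cat_def shiftA_def by auto
        then show ?thesis using r1 r2 aA by (cases a) fastforce
      qed
    next
      case aA: False
      then obtain i j where ij: "(i,j) \<in> A2" "a = (i+N1, j+N1)" using a unfolding cat_def shiftA_def by auto
      show ?thesis
      proof (cases "b \<in> A1")
        case True then show ?thesis using r1 r2 ij by (cases b) fastforce
      next
        case False
        then obtain k l where kl: "(k,l) \<in> A2" "b = (k+N1, l+N1)" using b unfolding cat_def shiftA_def by auto
        have "(i,j) \<noteq> (k,l)" using ab ij kl by auto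
        then have "{i,j} \<inter> {k,l} = {}" using diagram_disj[OF d2 ij(1) kl(1)] by simp
        then show ?thesis using ij kl by auto
      qed
    qed
  qed
  show ?thesis using rng dj d1 unfolding diagram1_def by simp
qed

lemma cat_shadow:
  assumes s1: "shadow1 N1 A1" and s2: "shadow1 N2 A2"
  shows "shadow1 (N1+N2) (cat N1 A1 A2)"
proof -
  have d1: "diagram1 N1 A1" and d2: "diagram1 N2 A2" using s1 s2 unfolding shadow1_def by auto
  let ?A = "cat N1 A1 A2"
  have cr: "\<forall>a\<in>?A. \<exists>b\<in>?A. crosses a b"
  proof
    fix a assume a: "a \<in> ?A"
    show "\<exists>b\<in>?A. crosses a b"
    proof (cases "a \<in> A1")
      case True
      then obtain b where "b \<in> A1" "crosses a b" using s1 unfolding shadow1_def by blast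
      then show ?thesis unfolding cat_def by blast
    next
      case False
      then obtain i j where ij: "(i,j) \<in> A2" "a = (i+N1, j+N1)" using a unfolding cat_def shiftA_def by auto
      obtain k l where "(k,l) \<in> A2" "crosses (i,j) (k,l)"
        using s2 ij(1) unfolding shadow1_def by (metis prod.exhaust)
      then have "(k+N1, l+N1) \<in> ?A" "crosses a (k+N1, l+N1)"
        unfolding cat_def using shiftA_mem2 ij(2) by (auto simp: crosses_def)
      then show ?thesis by blast
    qed
  qed
  have inc: "\<forall>v\<in>{1..N1+N2}. incident ?A v"
  proof
    fix v assume v: "v \<in> {1..N1+N2}"
    show "incident ?A v"
    proof (cases "v \<le> N1")
      case True
      then have "incident A1 v" using s1 v unfolding shadow1_def by auto
      then show ?thesis unfolding incident_def cat_def by auto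
    next
      case False
      then have "v - N1 \<in> {1..N2}" using v by auto
      then have "incident A2 (v - N1)" using s2 unfolding shadow1_def by blast
      then obtain i j where ij: "(i,j) \<in> A2" "v - N1 = i \<or> v - N1 = j" unfolding incident_def by auto
      then have "(i+N1, j+N1) \<in> ?A" unfolding cat_def using shiftA_mem2 by blast
      then show ?thesis using ij False unfolding incident_def by force
    qed
  qed
  have st: "\<forall>(i,j)\<in>?A. (i+1, j-1) \<notin> ?A"
  proof (clarify)
    fix i j assume a: "(i,j) \<in> ?A" and b: "(i+1, j-1) \<in> ?A"
    have r1: "\<forall>(i,j)\<in>A1. 1 \<le> i \<and> i < j \<and> j \<le> N1" using d1 unfolding diagram1_def by simp
    have r2: "\<forall>(i,j)\<in>A2. 1 \<le> i \<and> i < j \<and> j \<le> N2" using d2 unfolding diagram1_def by simp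
    have rr: "\<forall>(i,j)\<in>?A. 1 \<le> i \<and> i < j \<and> j \<le> N1+N2" using cat_diagram[OF d1 d2] unfolding diagram1_def by simp
    have ij: "i+1 < j-1" using rr b by auto
    show False
    proof (cases "(i,j) \<in> A1")
      case True
      then have "j \<le> N1" using r1 by auto
      have "(i+1, j-1) \<notin> shiftA N1 A2" using \<open>j \<le> N1\<close> ij r2 unfolding shiftA_mem by auto
      then have "(i+1,j-1) \<in> A1" using b unfolding cat_def by auto
      then show False using s1 True unfolding shadow1_def by auto
    next
      case False
      then have sa: "(i,j) \<in> shiftA N1 A2" using a unfolding cat_def by auto
      then have "N1 \<le> i" "(i - N1, j - N1) \<in> A2" unfolding shiftA_mem by auto
      then have "(i+1, j-1) \<notin> A1" using r1 r2 by auto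
      then have "(i+1, j-1) \<in> shiftA N1 A2" using b unfolding cat_def by auto
      then have "(i - N1 + 1, j - N1 - 1) \<in> A2" unfolding shiftA_mem
        by (metis Nat.add_diff_assoc2 \<open>N1 \<le> i\<close> diff_diff_left add.commute)
      then show False using s2 \<open>(i - N1, j - N1) \<in> A2\<close> unfolding shadow1_def by auto
    qed
  qed
  show ?thesis unfolding shadow1_def using cat_diagram[OF d1 d2] cr inc st by simp
qed

lemma cat_card:
  assumes "diagram1 N1 A1" "finite A1" "finite A2"
  shows "card (cat N1 A1 A2) = card A1 + card A2"
proof -
  have inj: "inj_on (\<lambda>(i,j). (i+N1, j+N1::nat)) A2" unfolding inj_on_def by auto
  have dis: "A1 \<inter> shiftA N1 A2 = {}"
    using assms(1) unfolding diagram1_def shiftA_def by fastforce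
  have "card (shiftA N1 A2) = card A2" unfolding shiftA_def using card_image[OF inj] .
  then show ?thesis unfolding cat_def using card_Un_disjoint[OF assms(2) _ dis] assms(3)
    unfolding shiftA_def by simp
qed


lemma funpow_in_orbit: "(f^^k) x \<in> orbit_of f x"
  unfolding orbit_of_def by blast

lemma orbit_agree:
  assumes "\<forall>y\<in>orbit_of g x. f y = g y"
  shows "orbit_of f x = orbit_of g x"
proof -
  have "(f^^k) x = (g^^k) x" for k
  proof (induction k)
    case (Suc k)
    have "(f^^Suc k) x = f ((g^^k) x)" using Suc by simp
    also have "\<dots> = g ((g^^k) x)" using assms funpow_in_orbit by blast
    finally show ?case by simp
  qed simp
  then show ?thesis unfolding orbit_of_def by simp
qed

lemma orbit_shift:
  assumes "\<forall>y\<in>orbit_of g x. f (c + y) = c + g y"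
  shows "orbit_of f (c + x) = (\<lambda>y. c + y) ` orbit_of g x"
proof -
  have it: "(f^^k) (c + x) = c + (g^^k) x" for k
  proof (induction k)
    case (Suc k)
    have "(f^^Suc k) (c + x) = f (c + (g^^k) x)" using Suc by simp
    also have "\<dots> = c + g ((g^^k) x)" using assms funpow_in_orbit by blast
    finally show ?case by simp
  qed simp
  show ?thesis unfolding orbit_of_def it by blast
qed

lemma least_period:
  assumes "\<exists>n>0. (f^^n) x = x"
  obtains a where "a > 0" "(f^^a) x = x" "\<And>k. 0 < k \<Longrightarrow> k < a \<Longrightarrow> (f^^k) x \<noteq> x"
proof -
  from assms have "\<exists>n. (n > 0 \<and> (f^^n) x = x) \<and> (\<forall>m<n. \<not> (m > 0 \<and> (f^^m) x = x))"
    using exists_least_iff[of "\<lambda>n. n > 0 \<and> (f^^n) x = x"] by blast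
  then show ?thesis using that by blast
qed

context
  fixes N1 N2 A1 A2
  assumes s1: "shadow1 N1 A1" and s2: "shadow1 N2 A2"
begin

abbreviation "pp \<equiv> bp (N1+N2) (cat N1 A1 A2)"
abbreviation "p1 \<equiv> bp N1 A1"
abbreviation "p2 \<equiv> bp N2 A2"

lemma pf1: "perfect N1 A1" using s1 by (rule shadow_perfect)
lemma pf2: "perfect N2 A2" using s2 by (rule shadow_perfect)
lemma pfA: "perfect (N1+N2) (cat N1 A1 A2)" using cat_shadow[OF s1 s2] by (rule shadow_perfect)
lemma dA: "diagram1 (N1+N2) (cat N1 A1 A2)" using pfA unfolding perfect_def by simp
lemma N1pos: "1 \<le> N1" using s1 unfolding shadow1_def diagram1_def by simp
lemma N2pos: "1 \<le> N2" using s2 unfolding shadow1_def diagram1_def by simp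

lemma cat_ap1:
  assumes v: "v \<in> {1..N1}"
  shows "arc_perm (cat N1 A1 A2) v = arc_perm A1 v"
  using perfect_cases[OF pf1 v]
proof
  assume h: "(v, arc_perm A1 v) \<in> A1"
  then have "(v, arc_perm A1 v) \<in> (cat N1 A1 A2)" unfolding cat_def by simp
  then show ?thesis using arc_perm_arc[OF dA] by simp
next
  assume h: "(arc_perm A1 v, v) \<in> A1"
  then have "(arc_perm A1 v, v) \<in> (cat N1 A1 A2)" unfolding cat_def by simp
  then show ?thesis using arc_perm_arc[OF dA] by simp
qed

lemma cat_ap2:
  assumes u: "u \<in> {1..N2}"
  shows "arc_perm (cat N1 A1 A2) (N1 + u) = N1 + arc_perm A2 u"
  using perfect_cases[OF pf2 u]
proof
  assume h: "(u, arc_perm A2 u) \<in> A2"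
  then have "(u + N1, arc_perm A2 u + N1) \<in> (cat N1 A1 A2)" unfolding cat_def using shiftA_mem2 by blast
  then show ?thesis using arc_perm_arc[OF dA] by (simp add: add.commute)
next
  assume h: "(arc_perm A2 u, u) \<in> A2"
  then have "(arc_perm A2 u + N1, u + N1) \<in> (cat N1 A1 A2)" unfolding cat_def using shiftA_mem2 by blast
  then show ?thesis using arc_perm_arc[OF dA] by (simp add: add.commute)
qed

lemma cat_p1:
  assumes v: "v \<in> {1..N1}"
  shows "pp v = (if p1 v = 1 then N1 + 1 else p1 v)"
proof -
  have w: "arc_perm A1 v \<in> {1..N1}" using perfect_ap(1)[OF pf1 v] .
  show ?thesis using w N2pos unfolding bp_def comp_def cat_ap1[OF v] backbone_perm_def by auto
qed

lemma cat_p2: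
  assumes u: "u \<in> {1..N2}"
  shows "pp (N1 + u) = (if p2 u = 1 then 1 else N1 + p2 u)"
proof -
  have w: "arc_perm A2 u \<in> {1..N2}" using perfect_ap(1)[OF pf2 u] .
  show ?thesis using w N1pos unfolding bp_def comp_def cat_ap2[OF u] backbone_perm_def by auto
qed

lemma p1_maps: "\<forall>v\<in>{1..N1}. p1 v \<in> {1..N1}" using bp_maps[OF pf1] .
lemma p2_maps: "\<forall>v\<in>{1..N2}. p2 v \<in> {1..N2}" using bp_maps[OF pf2] .
lemma pp_maps: "\<forall>v\<in>{1..(N1+N2)}. pp v \<in> {1..(N1+N2)}" using bp_maps[OF pfA] .

lemma orb1:
  assumes v: "v \<in> {1..N1}" and nv: "v \<notin> orbit_of p1 1"
  shows "orbit_of pp v = orbit_of p1 v"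
proof (rule orbit_agree, rule ballI)
  fix y assume y: "y \<in> orbit_of p1 v"
  have yr: "y \<in> {1..N1}" using orbit_subset[OF p1_maps v] y by blast
  have "p1 y \<noteq> 1"
  proof
    assume "p1 y = 1"
    then have "1 \<in> orbit_of p1 v" using orbit_step[OF y] by simp
    then have "orbit_of p1 v = orbit_of p1 1"
      using orbits_disjoint[OF _ p1_maps bp_inj[OF pf1] v, of 1 1] N1pos in_orbit_self by auto
    then show False using nv in_orbit_self[of v p1] by simp
  qed
  then show "pp y = p1 y" using cat_p1[OF yr] by simp
qed

lemma orb2:
  assumes u: "u \<in> {1..N2}" and nu: "u \<notin> orbit_of p2 1"
  shows "orbit_of pp (N1 + u) = (\<lambda>y. N1 + y) ` orbit_of p2 u"
proof (rule orbit_shift, rule ballI)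
  fix y assume y: "y \<in> orbit_of p2 u"
  have yr: "y \<in> {1..N2}" using orbit_subset[OF p2_maps u] y by blast
  have "p2 y \<noteq> 1"
  proof
    assume "p2 y = 1"
    then have "1 \<in> orbit_of p2 u" using orbit_step[OF y] by simp
    then have "orbit_of p2 u = orbit_of p2 1"
      using orbits_disjoint[OF _ p2_maps bp_inj[OF pf2] u, of 1 1] N2pos in_orbit_self by auto
    then show False using nu in_orbit_self[of u p2] by simp
  qed
  then show "pp (N1 + y) = N1 + p2 y" using cat_p2[OF yr] by simp
qed

lemma orb0:
  "orbit_of pp 1 = orbit_of p1 1 \<union> (\<lambda>y. N1 + y) ` orbit_of p2 1 \<and> (\<exists>n>0. (pp^^n) 1 = 1)"
proof -
  have one1: "1 \<in> {1..N1}" using N1pos by simp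
  have one2: "1 \<in> {1..N2}" using N2pos by simp
  have ex1: "\<exists>n>0. (p1^^n) 1 = 1" by (rule periodic_exists[OF _ p1_maps bp_inj[OF pf1] one1]) simp
  obtain a where a: "a > 0" "(p1^^a) 1 = 1" "\<And>k. 0 < k \<Longrightarrow> k < a \<Longrightarrow> (p1^^k) 1 \<noteq> 1"
    using least_period[OF ex1] by blast
  have ex2: "\<exists>n>0. (p2^^n) 1 = 1" by (rule periodic_exists[OF _ p2_maps bp_inj[OF pf2] one2]) simp
  obtain b where b: "b > 0" "(p2^^b) 1 = 1" "\<And>k. 0 < k \<Longrightarrow> k < b \<Longrightarrow> (p2^^k) 1 \<noteq> 1"
    using least_period[OF ex2] by blast
  have A: "k < a \<Longrightarrow> (pp^^k) 1 = (p1^^k) 1" for k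
  proof (induction k)
    case (Suc k)
    have kin: "(p1^^k) 1 \<in> {1..N1}" using funpow_in[OF p1_maps one1] .
    have "p1 ((p1^^k) 1) \<noteq> 1" using a(3)[of "Suc k"] Suc.prems by simp
    then show ?case using Suc cat_p1[OF kin] by simp
  qed simp
  obtain a' where am: "a = Suc a'" using a(1) by (cases a) auto
  have Aa: "(pp^^a) 1 = N1 + 1"
  proof -
    have kin: "(p1^^a') 1 \<in> {1..N1}" using funpow_in[OF p1_maps one1] .
    have "p1 ((p1^^a') 1) = 1" using a(2) am by simp
    moreover have "(pp^^a) 1 = pp ((p1^^a') 1)" using A[of a'] am by simp
    ultimately show ?thesis using cat_p1[OF kin] by simp
  qed
  have B: "j < b \<Longrightarrow> (pp^^(a + j)) 1 = N1 + (p2^^j) 1" for j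
  proof (induction j)
    case 0 then show ?case using Aa by simp
  next
    case (Suc j)
    have kin: "(p2^^j) 1 \<in> {1..N2}" using funpow_in[OF p2_maps one2] .
    have "p2 ((p2^^j) 1) \<noteq> 1" using b(3)[of "Suc j"] Suc.prems by simp
    then show ?case using Suc cat_p2[OF kin] by simp
  qed
  obtain b' where bm: "b = Suc b'" using b(1) by (cases b) auto
  have Bb: "(pp^^(a+b)) 1 = 1"
  proof -
    have kin: "(p2^^b') 1 \<in> {1..N2}" using funpow_in[OF p2_maps one2] .
    have "p2 ((p2^^b') 1) = 1" using b(2) bm by simp
    moreover have "(pp^^(a+b)) 1 = pp (N1 + (p2^^b') 1)"
      using B[of b'] bm by simp
    ultimately show ?thesis using cat_p2[OF kin] by simp
  qed
  have o: "orbit_of pp 1 = {(pp^^k) 1 | k. k < a + b}" using orbit_periodic[OF Bb] a(1) by simp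
  have o1: "orbit_of p1 1 = {(p1^^k) 1 | k. k < a}" using orbit_periodic[OF a(2) a(1)] .
  have o2: "orbit_of p2 1 = {(p2^^k) 1 | k. k < b}" using orbit_periodic[OF b(2) b(1)] .
  have "{(pp^^k) 1 | k. k < a + b} = {(p1^^k) 1 | k. k < a} \<union> (\<lambda>y. N1 + y) ` {(p2^^k) 1 | k. k < b}"
  proof (intro equalityI subsetI)
    fix z assume "z \<in> {(pp^^k) 1 | k. k < a + b}"
    then obtain k where k: "k < a + b" "z = (pp^^k) 1" by auto
    show "z \<in> {(p1^^k) 1 | k. k < a} \<union> (\<lambda>y. N1 + y) ` {(p2^^k) 1 | k. k < b}"
    proof (cases "k < a")
      case True then show ?thesis using A k by auto
    next
      case False
      then have ka: "a + (k - a) = k" "k - a < b" using k by auto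
      have "z = N1 + (p2^^(k-a)) 1" using B[of "k-a"] k(2) ka by simp
      then show ?thesis using \<open>k - a < b\<close> by blast
    qed
  next
    fix z assume "z \<in> {(p1^^k) 1 | k. k < a} \<union> (\<lambda>y. N1 + y) ` {(p2^^k) 1 | k. k < b}"
    then show "z \<in> {(pp^^k) 1 | k. k < a + b}"
    proof
      assume "z \<in> {(p1^^k) 1 | k. k < a}"
      then obtain k where "k < a" "z = (p1^^k) 1" by auto
      then have "z = (pp^^k) 1" "k < a + b" using A by auto
      then show ?thesis by blast
    next
      assume "z \<in> (\<lambda>y. N1 + y) ` {(p2^^k) 1 | k. k < b}"
      then obtain j where "j < b" "z = N1 + (p2^^j) 1" by auto
      then have "z = (pp^^(a+j)) 1" "a + j < a + b" using B by auto
      then show ?thesis by blast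
    qed
  qed
  then have "orbit_of pp 1 = orbit_of p1 1 \<union> (\<lambda>y. N1 + y) ` orbit_of p2 1"
    unfolding o o1 o2 .
  moreover have "\<exists>n>0. (pp^^n) 1 = 1" using Bb a(1) by (intro exI[of _ "a+b"]) simp
  ultimately show ?thesis by blast
qed

end


lemma remove_base_orbit:
  assumes fin: "finite S" and maps: "\<forall>x\<in>S. f x \<in> S" and inj: "inj_on f S" and x0: "x0 \<in> S"
  shows "card (orbit_of f ` (S - orbit_of f x0)) = card (orbit_of f ` S) - 1"
proof -
  let ?E = "orbit_of f x0"
  have ins: "orbit_of f ` S = insert ?E (orbit_of f ` (S - ?E))"
  proof (intro equalityI subsetI)
    fix B assume "B \<in> orbit_of f ` S"
    then obtain v where v: "v \<in> S" "B = orbit_of f v" by auto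
    show "B \<in> insert ?E (orbit_of f ` (S - ?E))"
    proof (cases "v \<in> ?E")
      case True
      then have "orbit_of f v = ?E"
        using orbits_disjoint[OF fin maps inj v(1) x0, of v] in_orbit_self[of v f] by simp
      then show ?thesis using v by simp
    next
      case False then show ?thesis using v by blast
    qed
  next
    fix B assume "B \<in> insert ?E (orbit_of f ` (S - ?E))"
    then show "B \<in> orbit_of f ` S" using x0 by auto
  qed
  have nE: "?E \<notin> orbit_of f ` (S - ?E)"
  proof
    assume "?E \<in> orbit_of f ` (S - ?E)"
    then obtain v where "v \<in> S - ?E" "?E = orbit_of f v" by auto
    then show False using in_orbit_self[of v f] by simp
  qed
  have "finite (orbit_of f ` (S - ?E))" using fin by simp
  then show ?thesis unfolding ins using nE by simp
qed

context
  fixes N1 N2 A1 A2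
  assumes s1: "shadow1 N1 A1" and s2: "shadow1 N2 A2"
begin

lemma cat_boundary:
  "boundary_components (N1+N2) (cat N1 A1 A2) = boundary_components N1 A1 + boundary_components N2 A2 - 1"
proof -
  let ?pp = "bp (N1+N2) (cat N1 A1 A2)" and ?p1 = "bp N1 A1" and ?p2 = "bp N2 A2"
  let ?E1 = "orbit_of ?p1 1" and ?E2 = "orbit_of ?p2 1" and ?O = "orbit_of ?pp 1"
  let ?sh = "\<lambda>B. (\<lambda>y. N1 + y) ` B"
  let ?R1 = "orbit_of ?p1 ` ({1..N1} - ?E1)"
  let ?R2' = "orbit_of ?p2 ` ({1..N2} - ?E2)"
  let ?R2 = "?sh ` ?R2'"
  have N1pos: "1 \<le> N1" using N1pos[OF s1 s2] .
  have N2pos: "1 \<le> N2" using N2pos[OF s1 s2] .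
  have o0: "?O = ?E1 \<union> ?sh ?E2" and per: "\<exists>n>0. (?pp^^n) 1 = 1" using orb0[OF s1 s2] by auto
  obtain n where n: "n > 0" "(?pp^^n) 1 = 1" using per by blast
  have inO: "orbit_of ?pp v = ?O" if "v \<in> ?O" for v
    using orbit_same[OF n(2) n(1) that] .
  have p1m: "\<forall>v\<in>{1..N1}. ?p1 v \<in> {1..N1}" using p1_maps[OF s1 s2] .
  have p2m: "\<forall>v\<in>{1..N2}. ?p2 v \<in> {1..N2}" using p2_maps[OF s1 s2] .
  have R: "orbit_of ?pp ` {1..N1+N2} = insert ?O (?R1 \<union> ?R2)"
  proof (intro equalityI subsetI)
    fix B assume "B \<in> orbit_of ?pp ` {1..N1+N2}"
    then obtain v where v: "v \<in> {1..N1+N2}" "B = orbit_of ?pp v" by auto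
    show "B \<in> insert ?O (?R1 \<union> ?R2)"
    proof (cases "v \<le> N1")
      case True
      then have v1: "v \<in> {1..N1}" using v by simp
      show ?thesis
      proof (cases "v \<in> ?E1")
        case True then show ?thesis using inO o0 v by auto
      next
        case False
        then have "B = orbit_of ?p1 v" using orb1[OF s1 s2 v1] v by simp
        then show ?thesis using v1 False by blast
      qed
    next
      case False
      define u where "u = v - N1"
      have u: "u \<in> {1..N2}" "v = N1 + u" using v False unfolding u_def by auto
      show ?thesis
      proof (cases "u \<in> ?E2")
        case True
        then have "v \<in> ?O" using o0 u by auto
        then show ?thesis using inO v by auto
      next
        case False
        then have "B = ?sh (orbit_of ?p2 u)" using orb2[OF s1 s2 u(1)] v u by simp
        then show ?thesis using u False by blast
      qed
    qed
  next
    fix B assume B: "B \<in> insert ?O (?R1 \<union> ?R2)"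
    show "B \<in> orbit_of ?pp ` {1..N1+N2}"
    proof (cases "B = ?O")
      case True then show ?thesis using N1pos by auto
    next
      case False
      then have "B \<in> ?R1 \<or> B \<in> ?R2" using B by auto
      then show ?thesis
      proof
        assume "B \<in> ?R1"
        then obtain v where v: "v \<in> {1..N1}" "v \<notin> ?E1" "B = orbit_of ?p1 v" by auto
        then have "B = orbit_of ?pp v" using orb1[OF s1 s2] by simp
        then show ?thesis using v by auto
      next
        assume "B \<in> ?R2"
        then obtain u where u: "u \<in> {1..N2}" "u \<notin> ?E2" "B = ?sh (orbit_of ?p2 u)" by auto
        then have "B = orbit_of ?pp (N1 + u)" using orb2[OF s1 s2] by simp
        moreover have "N1 + u \<in> {1..N1+N2}" using u by auto
        ultimately show ?thesis by blast
      qed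
    qed
  qed
  have sub1: "B \<subseteq> {1..N1}" if "B \<in> ?R1" for B
    using that orbit_subset[OF p1m] by blast
  have sub2: "B \<subseteq> {N1+1..}" if BB: "B \<in> ?R2" for B
  proof -
    obtain u where u: "u \<in> {1..N2}" "B = ?sh (orbit_of ?p2 u)" using BB by auto
    then show ?thesis using orbit_subset[OF p2m u(1)] by auto
  qed
  have ne1: "B \<noteq> {}" if "B \<in> ?R1" for B using that in_orbit_self by blast
  have m1: "1 \<in> ?O" using in_orbit_self by blast
  have m2: "N1 + 1 \<in> ?O" using o0 in_orbit_self[of 1 ?p2] by blast
  have nO: "?O \<notin> ?R1 \<union> ?R2"
  proof
    assume "?O \<in> ?R1 \<union> ?R2"
    then show False
    proof
      assume "?O \<in> ?R1" then have "?O \<subseteq> {1..N1}" by (rule sub1)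
      then show False using m2 by auto
    next
      assume "?O \<in> ?R2" then have "?O \<subseteq> {N1+1..}" by (rule sub2)
      then have "1 \<in> {N1+1..}" using m1 by blast
      then show False using N1pos by simp
    qed
  qed
  have dis: "?R1 \<inter> ?R2 = {}"
  proof (rule equals0I)
    fix B assume "B \<in> ?R1 \<inter> ?R2"
    then have "B \<subseteq> {1..N1}" "B \<subseteq> {N1+1..}" "B \<noteq> {}" using sub1 sub2 ne1 by auto
    then obtain x where x: "x \<in> B" "B \<subseteq> {1..N1}" "B \<subseteq> {N1+1..}" by blast
    then have "x \<in> {1..N1}" "x \<in> {N1+1..}" by blast+
    then show False by simp
  qed
  have c1: "card ?R1 = boundary_components N1 A1 - 1"
    unfolding boundary_bp using remove_base_orbit[OF _ p1m bp_inj[OF pf1[OF s1 s2]], of 1] N1pos by simp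
  have injsh: "inj_on ?sh ?R2'"
    by (rule inj_onI) (simp add: inj_image_eq_iff inj_on_def)
  have c2: "card ?R2 = boundary_components N2 A2 - 1"
    unfolding boundary_bp card_image[OF injsh]
    using remove_base_orbit[OF _ p2m bp_inj[OF pf2[OF s1 s2]], of 1] N2pos by simp
  have b1: "boundary_components N1 A1 \<ge> 1" using part_a_bound(2)[OF s1] .
  have b2: "boundary_components N2 A2 \<ge> 1" using part_a_bound(2)[OF s2] .
  have "card (insert ?O (?R1 \<union> ?R2)) = Suc (card ?R1 + card ?R2)"
    using nO dis by (simp add: card_Un_disjoint)
  then show ?thesis unfolding boundary_bp[of "N1+N2"] R using c1 c2 b1 b2
    unfolding boundary_bp by simp
qed

end

lemma cat_genus:
  assumes s1: "shadow1 N1 A1" and s2: "shadow1 N2 A2"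
    and g1: "has_genus N1 A1 g1" and g2: "has_genus N2 A2 g2"
  shows "shadow1 (N1+N2) (cat N1 A1 A2)" "has_genus (N1+N2) (cat N1 A1 A2) (g1+g2)"
    "card (cat N1 A1 A2) = card A1 + card A2"
proof -
  show "shadow1 (N1+N2) (cat N1 A1 A2)" using cat_shadow[OF s1 s2] .
  have d1: "diagram1 N1 A1" using s1 unfolding shadow1_def by simp
  have f1: "finite A1" using perfect_card(2)[OF shadow_perfect[OF s1]] .
  have f2: "finite A2" using perfect_card(2)[OF shadow_perfect[OF s2]] .
  show c: "card (cat N1 A1 A2) = card A1 + card A2" using cat_card[OF d1 f1 f2] .
  have b1: "boundary_components N1 A1 \<ge> 1" using part_a_bound(2)[OF s1] .
  have b2: "boundary_components N2 A2 \<ge> 1" using part_a_bound(2)[OF s2] .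
  show "has_genus (N1+N2) (cat N1 A1 A2) (g1+g2)"
    using g1 g2 b1 b2 unfolding has_genus_def c cat_boundary[OF s1 s2] by simp
qed


section \<open>Explicit families\<close>

datatype lab = Pre nat | Bun nat nat | Mid nat | Tl nat nat | Xl nat

fun valid :: "nat \<Rightarrow> nat \<Rightarrow> lab \<Rightarrow> bool" where
  "valid m h (Pre k) = (k < 4)"
| "valid m h (Bun u j) = (u + 2 \<le> h \<and> j < 4)"
| "valid m h (Mid k) = (k < 2)"
| "valid m h (Tl t k) = (t + 2 \<le> h \<and> k < 8)"
| "valid m h (Xl k) = (m = 1 \<and> k < 2)"

fun pos :: "nat \<Rightarrow> nat \<Rightarrow> lab \<Rightarrow> nat" where
  "pos m h (Pre k) = k + 1"
| "pos m h (Bun u j) = 5 + m + 4*u + j"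
| "pos m h (Mid k) = 4*h + 1 + m + k"
| "pos m h (Tl t k) = 4*h + 3 + m + 8*t + k"
| "pos m h (Xl k) = (if k = 0 then 5 else 12*h + 2*m - 6)"

definition NF :: "nat \<Rightarrow> nat \<Rightarrow> nat" where "NF m h = 12*h + 2*m - 6"

definition kmap :: "nat \<Rightarrow> nat" where "kmap j = (if j = 3 then 0 else 2*j+2)"
definition jmap :: "nat \<Rightarrow> nat" where "jmap k = (if k = 0 then 3 else k div 2 - 1)"

fun sg :: "nat \<Rightarrow> lab \<Rightarrow> lab" where
  "sg h (Pre k) = (if k = 0 then Pre 3 else if k = 3 then Pre 0 else Mid (k-1))"
| "sg h (Mid k) = Pre (k+1)"
| "sg h (Bun u j) = Tl (h-2-u) (kmap j)"
| "sg h (Tl t k) = (if odd k then Tl t (if k < 4 then k+4 else k-4) else Bun (h-2-t) (jmap k))"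
| "sg h (Xl k) = Xl (1-k)"

definition B0 :: "nat \<Rightarrow> lab" where "B0 h = (if 2 \<le> h then Bun 0 0 else Mid 0)"
definition END :: "nat \<Rightarrow> lab" where "END m = (if m = 1 then Xl 1 else Pre 0)"

fun sc :: "nat \<Rightarrow> nat \<Rightarrow> lab \<Rightarrow> lab" where
  "sc m h (Pre k) = (if k < 3 then Pre (k+1) else if m = 1 then Xl 0 else B0 h)"
| "sc m h (Xl k) = (if k = 0 then B0 h else Pre 0)"
| "sc m h (Bun u j) = (if j < 3 then Bun u (j+1) else if u + 3 \<le> h then Bun (u+1) 0 else Mid 0)"
| "sc m h (Mid k) = (if k = 0 then Mid 1 else if 2 \<le> h then Tl 0 0 else END m)"
| "sc m h (Tl t k) = (if k < 7 then Tl t (k+1) else if t + 3 \<le> h then Tl (t+1) 0 else END m)"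

definition pL :: "nat \<Rightarrow> nat \<Rightarrow> lab \<Rightarrow> lab" where "pL m h l = sc m h (sg h l)"

lemma pL_Pre: "k < 4 \<Longrightarrow> pL m h (Pre k) = (if k = 0 then (if m = 1 then Xl 0 else B0 h)
   else if k = 1 then Mid 1 else if k = 2 then (if 2 \<le> h then Tl 0 0 else END m) else Pre 1)"
  by (auto simp: pL_def)

lemma pL_Mid: "k < 2 \<Longrightarrow> pL m h (Mid k) = (if k = 0 then Pre 2 else Pre 3)"
  by (auto simp: pL_def)

lemma pL_X: "k < 2 \<Longrightarrow> pL m h (Xl k) = (if k = 0 then Pre 0 else B0 h)"
  by (auto simp: pL_def)

lemma pL_Bun: "j < 4 \<Longrightarrow> pL m h (Bun u j) = (if j = 0 then Tl (h-2-u) 3 else if j = 1 then Tl (h-2-u) 5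
   else if j = 2 then Tl (h-2-u) 7 else Tl (h-2-u) 1)"
  by (auto simp: pL_def kmap_def)

lemma pL_Tl: "k < 8 \<Longrightarrow> pL m h (Tl t k) = (if k = 0 then (if h-2-t+3 \<le> h then Bun (h-2-t+1) 0 else Mid 0)
  else if k = 1 then Tl t 6 else if k = 2 then Bun (h-2-t) 1
  else if k = 3 then (if t+3 \<le> h then Tl (t+1) 0 else END m)
  else if k = 4 then Bun (h-2-t) 2 else if k = 5 then Tl t 2
  else if k = 6 then Bun (h-2-t) 3 else Tl t 4)"
  by (auto simp: pL_def jmap_def)

context
  fixes m h :: nat
  assumes m: "m \<le> 1" and h: "1 \<le> h"
begin

lemma sg_valid: "valid m h l \<Longrightarrow> valid m h (sg h l)"
  by (cases l) (auto simp: kmap_def jmap_def)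

lemma sg_sg: "valid m h l \<Longrightarrow> sg h (sg h l) = l"
  by (cases l) (auto simp: kmap_def jmap_def)

lemma sg_ne: assumes "valid m h l" shows "sg h l \<noteq> l"
proof (cases l)
  case (Xl k) then show ?thesis using assms by (cases k) auto
qed auto

lemma sc_valid: "valid m h l \<Longrightarrow> valid m h (sc m h l)"
  using m by (cases l) (auto simp: B0_def END_def)

lemma pos_range: "valid m h l \<Longrightarrow> 1 \<le> pos m h l \<and> pos m h l \<le> NF m h"
  using m h by (cases l) (auto simp: NF_def)

lemma pos_sc: "valid m h l \<Longrightarrow> pos m h (sc m h l) = backbone_perm (NF m h) (pos m h l)"
  using m h by (cases l) (auto simp: NF_def B0_def END_def backbone_perm_def)

lemma dm4: "(j::nat) < 4 \<Longrightarrow> (4*u + j) div 4 = u \<and> (4*u + j) mod 4 = j" by simp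
lemma dm8: "(j::nat) < 8 \<Longrightarrow> (8*u + j) div 8 = u \<and> (8*u + j) mod 8 = j" by simp

definition lab_of :: "nat \<Rightarrow> lab" where
  "lab_of v = (if v \<le> 4 then Pre (v-1) else if m = 1 \<and> v = 5 then Xl 0
     else if v \<le> 4*h+m then Bun ((v-5-m) div 4) ((v-5-m) mod 4)
     else if v \<le> 4*h+2+m then Mid (v-4*h-1-m)
     else if v \<le> 12*h+m-6 then Tl ((v-4*h-3-m) div 8) ((v-4*h-3-m) mod 8) else Xl 1)"

lemma lab_pos: assumes "valid m h l" shows "lab_of (pos m h l) = l"
proof (cases l)
  case (Pre k) then show ?thesis using assms unfolding lab_of_def by simp
next
  case (Bun u j)
  then have uj: "u + 2 \<le> h" "j < 4" using assms by auto
  have e: "5 + m + 4*u + j - 5 - m = 4*u + j" by simp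
  show ?thesis using Bun uj m dm4[OF uj(2), of u] unfolding lab_of_def e by auto
next
  case (Mid k) then show ?thesis using assms m h unfolding lab_of_def by auto
next
  case (Tl t k)
  then have tk: "t + 2 \<le> h" "k < 8" using assms by auto
  have e: "4*h + 3 + m + 8*t + k - 4*h - 3 - m = 8*t + k" by simp
  show ?thesis using Tl tk m dm8[OF tk(2), of t] unfolding lab_of_def e by auto
next
  case (Xl k)
  then have "m = 1" "k < 2" using assms by auto
  then show ?thesis using Xl h unfolding lab_of_def by auto
qed

lemma pos_inj: "valid m h l \<Longrightarrow> valid m h l' \<Longrightarrow> pos m h l = pos m h l' \<Longrightarrow> l = l'"
  using lab_pos by metis

lemma pos_surj:
  assumes v: "v \<in> {1..NF m h}"
  shows "\<exists>l. valid m h l \<and> pos m h l = v"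
proof -
  have v1: "1 \<le> v" "v \<le> 12*h + 2*m - 6" using v unfolding NF_def by auto
  show ?thesis
  proof (cases "v \<le> 4")
    case True then show ?thesis by (intro exI[of _ "Pre (v-1)"]) (use v1 in auto)
  next
    case c1: False
    show ?thesis
    proof (cases "m = 1 \<and> v = 5")
      case True then show ?thesis by (intro exI[of _ "Xl 0"]) auto
    next
      case c2: False
      show ?thesis
      proof (cases "v \<le> 4*h + m")
        case True
        define x where "x = v - 5 - m"
        have x: "x = 4*(x div 4) + x mod 4" "x mod 4 < 4" by simp_all
        have "v = 5 + m + x" "x < 4*h - 4" using c1 c2 True m unfolding x_def by auto
        then have "x div 4 + 2 \<le> h" "v = 5 + m + 4*(x div 4) + x mod 4" using x by linarith+
        then show ?thesis using x by (intro exI[of _ "Bun (x div 4) (x mod 4)"]) auto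
      next
        case c3: False
        show ?thesis
        proof (cases "v \<le> 4*h + 2 + m")
          case True then show ?thesis using c3 by (intro exI[of _ "Mid (v - 4*h - 1 - m)"]) auto
        next
          case c4: False
          show ?thesis
          proof (cases "v \<le> 12*h + m - 6")
            case True
            define x where "x = v - 4*h - 3 - m"
            have x: "x = 8*(x div 8) + x mod 8" "x mod 8 < 8" by simp_all
            have "v = 4*h + 3 + m + x" "x < 8*h - 8" using c4 True m h unfolding x_def by auto
            then have "x div 8 + 2 \<le> h" "v = 4*h + 3 + m + 8*(x div 8) + x mod 8" using x by linarith+
            then show ?thesis using x by (intro exI[of _ "Tl (x div 8) (x mod 8)"]) auto
          next
            case False
            then have "m = 1" "v = 12*h + 2*m - 6" using v1 m by auto
            then show ?thesis using h by (intro exI[of _ "Xl 1"]) auto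
          qed
        qed
      qed
    qed
  qed
qed

lemma lt4: "(j::nat) < 4 \<Longrightarrow> j = 0 \<or> j = 1 \<or> j = 2 \<or> j = 3" by auto
lemma lt8: "(k::nat) < 8 \<Longrightarrow> k = 0 \<or> k = 1 \<or> k = 2 \<or> k = 3 \<or> k = 4 \<or> k = 5 \<or> k = 6 \<or> k = 7" by auto
lemma lt2: "(k::nat) < 2 \<Longrightarrow> k = 0 \<or> k = 1" by auto

lemma tri:
  assumes v: "valid m h l" and nb: "\<not> (m = 1 \<and> (l = Pre 0 \<or> l = Xl 0))"
  shows "pL m h (pL m h (pL m h l)) = l \<and> pL m h l \<noteq> l"
proof (cases l)
  case (Pre k)
  then have "k = 0 \<or> k = 1 \<or> k = 2 \<or> k = 3" using v lt4 by simp
  then show ?thesis using Pre nb m h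
    by (elim disjE) (auto simp: pL_Pre pL_Mid pL_X pL_Bun pL_Tl B0_def END_def)
next
  case (Bun u j)
  then have "j = 0 \<or> j = 1 \<or> j = 2 \<or> j = 3" "u + 2 \<le> h" using v lt4 by auto
  then show ?thesis using Bun m h
    by (elim disjE) (auto simp: pL_Pre pL_Mid pL_X pL_Bun pL_Tl B0_def END_def)
next
  case (Mid k)
  then have "k = 0 \<or> k = 1" using v lt2 by simp
  then show ?thesis using Mid m h
    by (elim disjE) (auto simp: pL_Pre pL_Mid pL_X pL_Bun pL_Tl B0_def END_def)
next
  case (Tl t k)
  then have "k = 0 \<or> k = 1 \<or> k = 2 \<or> k = 3 \<or> k = 4 \<or> k = 5 \<or> k = 6 \<or> k = 7" "t + 2 \<le> h"
    using v lt8 by auto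
  then show ?thesis using Tl m h
    by (elim disjE) (auto simp: pL_Pre pL_Mid pL_X pL_Bun pL_Tl B0_def END_def)
next
  case (Xl k)
  then have "k = 1" "m = 1" using v nb lt2 by auto
  then show ?thesis using Xl m h
    by (auto simp: pL_Pre pL_Mid pL_X pL_Bun pL_Tl B0_def END_def)
qed

lemma bigon: "m = 1 \<Longrightarrow> pL m h (Pre 0) = Xl 0 \<and> pL m h (Xl 0) = Pre 0"
  by (simp add: pL_def)

lemma nostack:
  assumes "valid m h l" "pos m h l < pos m h (sg h l)"
  shows "pL m h (sc m h l) \<noteq> sg h l"
  using assms m h apply (cases l) apply (auto simp: pL_def kmap_def jmap_def B0_def END_def split: if_splits) done

lemma cross_partner:
  assumes v: "valid m h l" and lt: "pos m h l < pos m h (sg h l)"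
  shows "\<exists>l'. valid m h l' \<and> pos m h l' < pos m h (sg h l') \<and>
            crosses (pos m h l, pos m h (sg h l)) (pos m h l', pos m h (sg h l'))"
proof (cases l)
  case (Pre k)
  then have "k = 0 \<or> k = 1 \<or> k = 2 \<or> k = 3" using v lt4 by simp
  then show ?thesis
  proof (elim disjE)
    assume "k = 0" then show ?thesis using Pre h m by (intro exI[of _ "Pre 2"]) (auto simp: crosses_def)
  next
    assume "k = 1" then show ?thesis using Pre h m by (intro exI[of _ "Pre 2"]) (auto simp: crosses_def)
  next
    assume "k = 2" then show ?thesis using Pre h m by (intro exI[of _ "Pre 0"]) (auto simp: crosses_def)
  next
    assume "k = 3" then show ?thesis using Pre lt by simp
  qed
next
  case (Bun u j)
  then have "u + 2 \<le> h" "j < 4" using v by auto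
  then show ?thesis using Bun h m by (intro exI[of _ "Pre 1"]) (auto simp: crosses_def kmap_def)
next
  case (Mid k)
  then show ?thesis using lt v h by auto
next
  case (Tl t k)
  then have k8: "k < 8" "t + 2 \<le> h" using v by auto
  show ?thesis
  proof (cases "k = 1 \<or> k = 3")
    case True then show ?thesis
    proof
      assume "k = 1" then show ?thesis using Tl k8 by (intro exI[of _ "Tl t 3"]) (auto simp: crosses_def)
    next
      assume "k = 3" then show ?thesis using Tl k8 by (intro exI[of _ "Tl t 1"]) (auto simp: crosses_def)
    qed
  next
    case False
    then have "k = 0 \<or> k = 2 \<or> k = 4 \<or> k = 5 \<or> k = 6 \<or> k = 7" using k8 lt8 by auto
    then show ?thesis using Tl lt k8 by (elim disjE) (auto simp: jmap_def)
  qed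
next
  case (Xl k)
  then have "k = 0 \<or> k = 1" "m = 1" using v lt2 by auto
  then show ?thesis
  proof (elim disjE)
    assume "k = 0" then show ?thesis using Xl h \<open>m = 1\<close> by (intro exI[of _ "Pre 2"]) (auto simp: crosses_def)
  next
    assume "k = 1" then show ?thesis using Xl lt h \<open>m = 1\<close> by simp
  qed
qed

end


lemma count_orbits:
  assumes p: "perfect N A"
    and o3: "\<And>v. v \<in> {1..N} \<Longrightarrow> v \<notin> orbit_of (bp N A) 1 \<Longrightarrow> card (orbit_of (bp N A) v) = 3"
  shows "N = card (orbit_of (bp N A) 1) + 3 * (boundary_components N A - 1)"
proof -
  have N1: "1 \<le> N" using p unfolding perfect_def diagram1_def by simp
  let ?p = "bp N A"
  let ?R = "orbit_of ?p ` {1..N}"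
  let ?E = "orbit_of ?p 1"
  have E: "?E \<in> ?R" using N1 by auto
  have finR: "finite ?R" by simp
  have sumN: "N = (\<Sum>B\<in>?R. card B)" using perfect_orbit_sum[OF p] .
  have "(\<Sum>B\<in>?R. card B) = card ?E + (\<Sum>B\<in>?R - {?E}. card B)"
    using E finR by (simp add: sum.remove)
  moreover have "(\<Sum>B\<in>?R - {?E}. card B) = (\<Sum>B\<in>?R - {?E}. 3)"
  proof (rule sum.cong)
    fix B assume B: "B \<in> ?R - {?E}"
    then have B1: "B \<in> ?R" and B2: "B \<noteq> ?E" by auto
    from B1 obtain v where v: "v \<in> {1..N}" "B = orbit_of ?p v" by (rule imageE) simp
    have "v \<notin> ?E"
    proof
      assume "v \<in> ?E"
      then have "orbit_of ?p v = ?E"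
        using orbits_disjoint[OF _ bp_maps[OF p] bp_inj[OF p] v(1), of 1 v] N1 in_orbit_self[of v ?p]
        by auto
      then show False using B2 v by simp
    qed
    then show "card B = 3" using o3[OF v(1)] v(2) by simp
  qed simp
  moreover have "(\<Sum>B\<in>?R - {?E}. (3::nat)) = 3 * (card ?R - 1)"
    using E finR by simp
  ultimately show ?thesis using sumN unfolding boundary_bp by simp
qed

definition famA :: "nat \<Rightarrow> nat \<Rightarrow> (nat \<times> nat) set" where
  "famA m h = {(pos m h l, pos m h (sg h l)) | l. valid m h l \<and> pos m h l < pos m h (sg h l)}"

context
  fixes m h :: nat
  assumes m: "m \<le> 1" and h: "1 \<le> h"
begin

lemma famA_mem: "(i,j) \<in> famA m h \<longleftrightarrow>
   (\<exists>l. valid m h l \<and> pos m h l < pos m h (sg h l) \<and> i = pos m h l \<and> j = pos m h (sg h l))"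
  unfolding famA_def by blast

lemma vsg: "valid m h l \<Longrightarrow> valid m h (sg h l)" using sg_valid[OF m h] .
lemma ssg: "valid m h l \<Longrightarrow> sg h (sg h l) = l" using sg_sg[OF m h] .
lemma pinj: "valid m h l \<Longrightarrow> valid m h l' \<Longrightarrow> pos m h l = pos m h l' \<Longrightarrow> l = l'" using pos_inj[OF m h] .
lemma prange: "valid m h l \<Longrightarrow> 1 \<le> pos m h l \<and> pos m h l \<le> NF m h" using pos_range[OF m h] .

lemma fam_diagram: "diagram1 (NF m h) (famA m h)"
proof -
  have N: "1 \<le> NF m h" using h unfolding NF_def by simp
  have r: "\<forall>(i,j)\<in>famA m h. 1 \<le> i \<and> i < j \<and> j \<le> NF m h"
  proof (clarify)
    fix i j assume "(i,j) \<in> famA m h"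
    then obtain l where l: "valid m h l" "pos m h l < pos m h (sg h l)" "i = pos m h l" "j = pos m h (sg h l)"
      unfolding famA_mem by blast
    show "1 \<le> i \<and> i < j \<and> j \<le> NF m h" using l prange[OF l(1)] prange[OF vsg[OF l(1)]] by auto
  qed
  have d: "\<forall>a\<in>famA m h. \<forall>b\<in>famA m h. a \<noteq> b \<longrightarrow> {fst a, snd a} \<inter> {fst b, snd b} = {}"
  proof (intro ballI impI)
    fix a b assume a: "a \<in> famA m h" and b: "b \<in> famA m h" and ab: "a \<noteq> b"
    obtain l where l: "valid m h l" "pos m h l < pos m h (sg h l)" "a = (pos m h l, pos m h (sg h l))"
      using a unfolding famA_def by blast
    obtain l' where l': "valid m h l'" "pos m h l' < pos m h (sg h l')" "b = (pos m h l', pos m h (sg h l'))"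
      using b unfolding famA_def by blast
    have ll: "l \<noteq> l'" using ab l l' by auto
    have sl: "sg h l \<noteq> sg h l'" using ll ssg l(1) l'(1) by metis
    have c1: "pos m h l \<noteq> pos m h l'" using pinj[OF l(1) l'(1)] ll by auto
    have c2: "pos m h l \<noteq> pos m h (sg h l')"
    proof
      assume "pos m h l = pos m h (sg h l')"
      then have "l = sg h l'" using pinj[OF l(1) vsg[OF l'(1)]] by simp
      then have "sg h l = l'" using ssg[OF l'(1)] by simp
      then show False using l(2) l'(2) \<open>l = sg h l'\<close> by simp
    qed
    have c3: "pos m h (sg h l) \<noteq> pos m h l'"
    proof
      assume "pos m h (sg h l) = pos m h l'"
      then have "sg h l = l'" using pinj[OF vsg[OF l(1)] l'(1)] by simp
      then have "l = sg h l'" using ssg[OF l(1)] by metis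
      then show False using l(2) l'(2) \<open>sg h l = l'\<close> by simp
    qed
    have c4: "pos m h (sg h l) \<noteq> pos m h (sg h l')" using pinj[OF vsg[OF l(1)] vsg[OF l'(1)]] sl by auto
    show "{fst a, snd a} \<inter> {fst b, snd b} = {}" using c1 c2 c3 c4 l(3) l'(3) by auto
  qed
  show ?thesis unfolding diagram1_def using N r d by blast
qed

lemma fam_ap:
  assumes l: "valid m h l"
  shows "arc_perm (famA m h) (pos m h l) = pos m h (sg h l)"
proof (cases "pos m h l < pos m h (sg h l)")
  case True
  then have "(pos m h l, pos m h (sg h l)) \<in> famA m h" using l unfolding famA_def by blast
  then show ?thesis using arc_perm_arc(1)[OF fam_diagram] by simp
next
  case False
  have "sg h l \<noteq> l" using sg_ne[OF m h l] .
  then have "pos m h (sg h l) \<noteq> pos m h l" using pinj[OF vsg[OF l] l] by auto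
  then have lt: "pos m h (sg h l) < pos m h (sg h (sg h l))" using False ssg[OF l] by simp
  then have "(pos m h (sg h l), pos m h l) \<in> famA m h"
    using vsg[OF l] ssg[OF l] unfolding famA_def by (smt (verit) mem_Collect_eq)
  then show ?thesis using arc_perm_arc(2)[OF fam_diagram] by simp
qed

lemma fam_shadow: "shadow1 (NF m h) (famA m h)"
proof -
  have cr: "\<forall>a\<in>famA m h. \<exists>b\<in>famA m h. crosses a b"
  proof
    fix a assume "a \<in> famA m h"
    then obtain l where l: "valid m h l" "pos m h l < pos m h (sg h l)" "a = (pos m h l, pos m h (sg h l))"
      unfolding famA_def by blast
    obtain l' where l': "valid m h l'" "pos m h l' < pos m h (sg h l')"
      "crosses (pos m h l, pos m h (sg h l)) (pos m h l', pos m h (sg h l'))"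
      using cross_partner[OF m h l(1,2)] by blast
    have "(pos m h l', pos m h (sg h l')) \<in> famA m h" using l' unfolding famA_def by blast
    then show "\<exists>b\<in>famA m h. crosses a b" using l'(3) l(3) by blast
  qed
  have inc: "\<forall>v\<in>{1..NF m h}. incident (famA m h) v"
  proof
    fix v assume "v \<in> {1..NF m h}"
    then obtain l where l: "valid m h l" "pos m h l = v" using pos_surj[OF m h] by blast
    have "sg h l \<noteq> l" using sg_ne[OF m h l(1)] .
    then have ne: "pos m h (sg h l) \<noteq> pos m h l" using pinj[OF vsg[OF l(1)] l(1)] by auto
    show "incident (famA m h) v"
    proof (cases "pos m h l < pos m h (sg h l)")
      case True
      then have "(pos m h l, pos m h (sg h l)) \<in> famA m h" using l unfolding famA_def by blast
      then show ?thesis using l(2) unfolding incident_def by blast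
    next
      case False
      then have lt: "pos m h (sg h l) < pos m h (sg h (sg h l))" using ne ssg[OF l(1)] by simp
      then have "(pos m h (sg h l), pos m h l) \<in> famA m h"
        using vsg[OF l(1)] ssg[OF l(1)] unfolding famA_def by (smt (verit) mem_Collect_eq)
      then show ?thesis using l(2) unfolding incident_def by blast
    qed
  qed
  have st: "\<forall>(i,j)\<in>famA m h. (i+1, j-1) \<notin> famA m h"
  proof (clarify)
    fix i j assume ij: "(i,j) \<in> famA m h" and ij2: "(i+1, j-1) \<in> famA m h"
    obtain l where l: "valid m h l" "pos m h l < pos m h (sg h l)" "i = pos m h l" "j = pos m h (sg h l)"
      using ij unfolding famA_mem by blast
    obtain l' where l': "valid m h l'" "pos m h l' < pos m h (sg h l')" "i + 1 = pos m h l'" "j - 1 = pos m h (sg h l')"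
      using ij2 unfolding famA_mem by blast
    have rj: "j \<le> NF m h" using prange[OF vsg[OF l(1)]] l(4) by simp
    have "pos m h (sc m h l) = backbone_perm (NF m h) i" using pos_sc[OF m h l(1)] l(3) by simp
    also have "\<dots> = i + 1" using l(2,3,4) rj prange[OF l(1)] unfolding backbone_perm_def by auto
    finally have "sc m h l = l'" using pinj[OF sc_valid[OF m h l(1)] l'(1)] l'(3) by simp
    have r1: "1 \<le> j - 1" using prange[OF vsg[OF l'(1)]] l'(4) by simp
    have "pos m h (sc m h (sg h l')) = backbone_perm (NF m h) (j - 1)"
      using pos_sc[OF m h vsg[OF l'(1)]] l'(4) by simp
    also have "\<dots> = j" using r1 rj unfolding backbone_perm_def by auto
    finally have "sc m h (sg h l') = sg h l"
      using pinj[OF sc_valid[OF m h vsg[OF l'(1)]] vsg[OF l(1)]] l(4) by simp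
    then have "pL m h (sc m h l) = sg h l" using \<open>sc m h l = l'\<close> unfolding pL_def by simp
    then show False using nostack[OF m h l(1,2)] by simp
  qed
  show ?thesis unfolding shadow1_def using fam_diagram cr inc st by blast
qed

lemma fam_bp: "valid m h l \<Longrightarrow> bp (NF m h) (famA m h) (pos m h l) = pos m h (pL m h l)"
  unfolding bp_def pL_def using fam_ap pos_sc[OF m h] vsg by simp

lemma fam_iter: "valid m h l \<Longrightarrow> valid m h ((pL m h ^^ k) l) \<and>
    (bp (NF m h) (famA m h) ^^ k) (pos m h l) = pos m h ((pL m h ^^ k) l)"
proof (induction k)
  case (Suc k)
  then have v: "valid m h ((pL m h ^^ k) l)" by simp
  have "valid m h (pL m h ((pL m h ^^ k) l))" using sc_valid[OF m h vsg[OF v]] unfolding pL_def .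
  then show ?case using Suc fam_bp[OF v] by simp
qed simp

end


context
  fixes m h :: nat
  assumes m: "m \<le> 1" and h: "1 \<le> h"
begin

lemma fam_card3:
  assumes l: "valid m h l" and nb: "\<not> (m = 1 \<and> (l = Pre 0 \<or> l = Xl 0))"
  shows "card (orbit_of (bp (NF m h) (famA m h)) (pos m h l)) = 3"
proof -
  let ?P = "bp (NF m h) (famA m h)"
  have t: "pL m h (pL m h (pL m h l)) = l" "pL m h l \<noteq> l" using tri[OF m h l nb] by auto
  have "(?P^^3) (pos m h l) = pos m h ((pL m h ^^ 3) l)" using fam_iter[OF m h l] by blast
  also have "(pL m h ^^ 3) l = l" using t(1) by (simp add: numeral_3_eq_3)
  finally have a: "(?P^^3) (pos m h l) = pos m h l" .
  have vl: "valid m h (pL m h l)" using sc_valid[OF m h sg_valid[OF m h l]] unfolding pL_def .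
  have "?P (pos m h l) = pos m h (pL m h l)" using fam_bp[OF m h l] .
  then have b: "?P (pos m h l) \<noteq> pos m h l" using pos_inj[OF m h vl l] t(2) by auto
  show ?thesis using orbit_card3[OF a b] .
qed

lemma fam_perfect: "perfect (NF m h) (famA m h)" using shadow_perfect[OF fam_shadow[OF m h]] .

end

lemma famT:
  assumes h: "1 \<le> h"
  shows "shadow1 (NF 0 h) (famA 0 h) \<and> has_genus (NF 0 h) (famA 0 h) h \<and> card (famA 0 h) = 6*h - 3"
proof -
  have m: "(0::nat) \<le> 1" by simp
  let ?N = "NF 0 h" and ?A = "famA 0 h"
  let ?P = "bp ?N ?A"
  have p: "perfect ?N ?A" using fam_perfect[OF m h] .
  have c3: "card (orbit_of ?P v) = 3" if v: "v \<in> {1..?N}" for v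
  proof -
    obtain l where l: "valid 0 h l" "pos 0 h l = v" using pos_surj[OF m h v] by blast
    show ?thesis using fam_card3[OF m h l(1)] l(2) by simp
  qed
  have one: "1 \<in> {1..?N}" using h unfolding NF_def by simp
  have "?N = card (orbit_of ?P 1) + 3 * (boundary_components ?N ?A - 1)"
    using count_orbits[OF p] c3 by blast
  then have e1: "?N = 3 + 3 * (boundary_components ?N ?A - 1)" using c3[OF one] by simp
  have b1: "boundary_components ?N ?A \<ge> 1" using part_a_bound(2)[OF fam_shadow[OF m h]] .
  have e2: "?N = 2 * card ?A" using perfect_card(1)[OF p] .
  have nf: "?N = 12 * h - 6" unfolding NF_def by simp
  have r: "boundary_components ?N ?A = 4*h - 2" using e1 b1 nf h by linarith
  have c: "card ?A = 6*h - 3" using e2 nf h by linarith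
  have g: "has_genus ?N ?A h" unfolding has_genus_def r c using h by (simp add: of_nat_diff)
  show ?thesis by (intro conjI fam_shadow[OF m h] g c)
qed

lemma famM:
  assumes h: "1 \<le> h"
  shows "shadow1 (NF 1 h) (famA 1 h) \<and> has_genus (NF 1 h) (famA 1 h) h \<and> card (famA 1 h) = 6*h - 2"
proof -
  have m: "(1::nat) \<le> 1" by simp
  let ?N = "NF 1 h" and ?A = "famA 1 h"
  let ?P = "bp ?N ?A"
  have p: "perfect ?N ?A" using fam_perfect[OF m h] .
  have v0: "valid 1 h (Pre 0)" "valid 1 h (Xl 0)" by simp_all
  have P1: "?P 1 = 5" using fam_bp[OF m h v0(1)] bigon[OF m h] by simp
  have P5: "?P 5 = 1" using fam_bp[OF m h v0(2)] bigon[OF m h] by simp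
  have per: "(?P^^2) 1 = 1" using P1 P5 by (simp add: numeral_2_eq_2)
  have o1: "orbit_of ?P 1 = {(?P^^k) 1 | k. k < 2}" using orbit_periodic[OF per] by simp
  also have "\<dots> = {1, 5}"
  proof (intro equalityI subsetI)
    fix z assume "z \<in> {(?P^^k) 1 | k. k < 2}"
    then obtain k where "k < 2" "z = (?P^^k) 1" by blast
    then have "k = 0 \<or> k = 1" by auto
    then show "z \<in> {1, 5}" using \<open>z = (?P^^k) 1\<close> P1 by auto
  next
    fix z assume "z \<in> {1::nat, 5}"
    then have "z = (?P^^0) 1 \<or> z = (?P^^1) 1" using P1 by auto
    then show "z \<in> {(?P^^k) 1 | k. k < 2}"
    proof
      assume "z = (?P^^0) 1" then show ?thesis by (intro CollectI exI[of _ 0]) simp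
    next
      assume "z = (?P^^1) 1" then show ?thesis by (intro CollectI exI[of _ 1]) simp
    qed
  qed
  finally have oE: "orbit_of ?P 1 = {1, 5}" .
  have c3: "card (orbit_of ?P v) = 3" if v: "v \<in> {1..?N}" and nv: "v \<notin> orbit_of ?P 1" for v
  proof -
    obtain l where l: "valid 1 h l" "pos 1 h l = v" using pos_surj[OF m h v] by blast
    have "v \<notin> {1, 5}" using nv oE by simp
    then have "pos 1 h l \<noteq> 1" "pos 1 h l \<noteq> 5" using l(2) by auto
    then have "l \<noteq> Pre 0" "l \<noteq> Xl 0" by auto
    then show ?thesis using fam_card3[OF m h l(1)] l(2) by simp
  qed
  have "?N = card (orbit_of ?P 1) + 3 * (boundary_components ?N ?A - 1)"
    using count_orbits[OF p] c3 by blast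
  then have e1: "?N = 2 + 3 * (boundary_components ?N ?A - 1)" using oE by simp
  have b1: "boundary_components ?N ?A \<ge> 1" using part_a_bound(2)[OF fam_shadow[OF m h]] .
  have e2: "?N = 2 * card ?A" using perfect_card(1)[OF p] .
  have nf: "?N = 12 * h - 4" unfolding NF_def by simp
  have r: "boundary_components ?N ?A = 4*h - 1" using e1 b1 nf h by linarith
  have c: "card ?A = 6*h - 2" using e2 nf h by linarith
  have g: "has_genus ?N ?A h" unfolding has_genus_def r c using h by (simp add: of_nat_diff)
  show ?thesis by (intro conjI fam_shadow[OF m h] g c)
qed


lemma base2: "shadow1 4 {(1,3),(2,4)} \<and> has_genus 4 {(1,3),(2,4)} 1 \<and> card {(1::nat,3::nat),(2,4)} = 2"
proof -
  let ?A = "{(1::nat,3::nat),(2,4)}"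
  have I: "{1..4::nat} = {1,2,3,4}" by auto
  have d: "diagram1 4 ?A" unfolding diagram1_def by auto
  have sh: "shadow1 4 ?A" unfolding shadow1_def
    using d by (auto simp: I crosses_def incident_def)
  have p: "perfect 4 ?A" using shadow_perfect[OF sh] .
  have a13: "arc_perm ?A 1 = 3" "arc_perm ?A 3 = 1" using arc_perm_arc[OF d, of 1 3] by auto
  have a24: "arc_perm ?A 2 = 4" "arc_perm ?A 4 = 2" using arc_perm_arc[OF d, of 2 4] by auto
  let ?P = "bp 4 ?A"
  have P: "?P 1 = 4" "?P 4 = 3" "?P 3 = 2" "?P 2 = 1"
    unfolding bp_def comp_def a13 a24 backbone_perm_def by auto
  have "(?P^^4) 1 = 1" using P by (simp add: numeral_eq_Suc)
  have s: "{1..4::nat} \<subseteq> orbit_of ?P 1"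
  proof -
    have "(?P^^0) 1 = 1" "(?P^^3) 1 = 2" "(?P^^2) 1 = 3" "(?P^^1) 1 = 4" using P by (simp_all add: numeral_eq_Suc)
    then show ?thesis unfolding I orbit_of_def by (smt (verit) empty_subsetI insert_subset mem_Collect_eq)
  qed
  have "4 = card (orbit_of ?P 1) + 3 * (boundary_components 4 ?A - 1)"
    using count_orbits[OF p] s by blast
  moreover have "orbit_of ?P 1 = {1..4}"
    using s orbit_subset[OF bp_maps[OF p], of 1] by auto
  ultimately have "boundary_components 4 ?A = 1" using part_a_bound(2)[OF sh] by simp
  then have "has_genus 4 ?A 1" unfolding has_genus_def by simp
  then show ?thesis using sh by simp
qed

definition Ach :: "nat \<Rightarrow> nat \<Rightarrow> bool" where
  "Ach g l \<longleftrightarrow> (\<exists>N A. shadow1 N A \<and> has_genus N A g \<and> card A = l)"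

lemma Ach_cat: "Ach g1 l1 \<Longrightarrow> Ach g2 l2 \<Longrightarrow> Ach (g1+g2) (l1+l2)"
  unfolding Ach_def using cat_genus by metis

lemma Ach2: "Ach 1 2" unfolding Ach_def using base2 by blast
lemma AchT: "1 \<le> h \<Longrightarrow> Ach h (6*h-3)" unfolding Ach_def using famT by blast
lemma AchM: "1 \<le> h \<Longrightarrow> Ach h (6*h-2)" unfolding Ach_def using famM by blast
lemma Ach3: "Ach 1 3" using AchT[of 1] by simp
lemma Ach4: "Ach 1 4" using AchM[of 1] by simp

lemma Ach_range: "\<forall>l. 2 * Suc n \<le> l \<and> l \<le> 6 * Suc n - 2 \<longrightarrow> Ach (Suc n) l"
proof (induction n)
  case 0
  show ?case
  proof (intro allI impI)
    fix l assume "2 * Suc 0 \<le> l \<and> l \<le> 6 * Suc 0 - 2"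
    then have "l = 2 \<or> l = 3 \<or> l = 4" by auto
    then show "Ach (Suc 0) l" using Ach2 Ach3 Ach4 by auto
  qed
next
  case (Suc n)
  show ?case
  proof (intro allI impI)
    fix l assume l: "2 * Suc (Suc n) \<le> l \<and> l \<le> 6 * Suc (Suc n) - 2"
    show "Ach (Suc (Suc n)) l"
    proof (cases "l \<ge> 6 * Suc (Suc n) - 3")
      case True
      then have "l = 6 * Suc (Suc n) - 3 \<or> l = 6 * Suc (Suc n) - 2" using l by auto
      then show ?thesis using AchT[of "Suc (Suc n)"] AchM[of "Suc (Suc n)"] by auto
    next
      case False
      have "\<exists>x. (x = 2 \<or> x = 3 \<or> x = 4) \<and> 2 * Suc n \<le> l - x \<and> l - x \<le> 6 * Suc n - 2 \<and> x \<le> l"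
      proof (cases "l \<ge> 2 * Suc n + 6")
        case True then show ?thesis using l False by (intro exI[of _ 4]) auto
      next
        case c2: False
        show ?thesis
        proof (cases "l = 2 * Suc n + 2")
          case True then show ?thesis by (intro exI[of _ 2]) auto
        next
          case False
          then have "l = 2 * Suc n + 3 \<or> l = 2 * Suc n + 4 \<or> l = 2 * Suc n + 5" using l c2 by auto
          then show ?thesis
          proof (elim disjE)
            assume "l = 2 * Suc n + 3" then show ?thesis by (intro exI[of _ 3]) auto
          next
            assume "l = 2 * Suc n + 4" then show ?thesis by (intro exI[of _ 4]) auto
          next
            assume "l = 2 * Suc n + 5" then show ?thesis by (intro exI[of _ 4]) auto
          qed
        qed
      qed
      then obtain x where x: "x = 2 \<or> x = 3 \<or> x = 4" "2 * Suc n \<le> l - x" "l - x \<le> 6 * Suc n - 2" "x \<le> l"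
        by blast
      have a1: "Ach (Suc n) (l - x)" using Suc.IH x(2,3) by blast
      have a2: "Ach 1 x" using x(1) Ach2 Ach3 Ach4 by auto
      have "Ach (Suc n + 1) (l - x + x)" using Ach_cat[OF a1 a2] .
      then show ?thesis using x(4) by simp
    qed
  qed
qed

theorem theorem1:
  fixes g :: nat
  assumes "g \<ge> 1"
  shows "(\<forall>N A. shadow1 N A \<and> has_genus N A g \<longrightarrow>
            2 * g \<le> card A \<and> card A \<le> 6 * g - 2)
       \<and> finite {(N, A). shadow1 N A \<and> has_genus N A g}
       \<and> (\<forall>l. 2 * g \<le> l \<and> l \<le> 6 * g - 2 \<longrightarrow>
            (\<exists>N A. shadow1 N A \<and> has_genus N A g \<and> card A = l))"
proof (intro conjI)
  show "\<forall>N A. shadow1 N A \<and> has_genus N A g \<longrightarrow> 2 * g \<le> card A \<and> card A \<le> 6 * g - 2"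
    using part_a by blast
  show "finite {(N, A). shadow1 N A \<and> has_genus N A g}"
  proof (rule finite_subset)
    show "{(N, A). shadow1 N A \<and> has_genus N A g} \<subseteq> {..12*g} \<times> Pow ({..12*g} \<times> {..12*g})"
    proof (clarify)
      fix N A assume sh: "shadow1 N A" and gg: "has_genus N A g"
      have N: "N \<le> 12 * g" using part_a[OF sh gg] by linarith
      have d: "diagram1 N A" using sh unfolding shadow1_def by simp
      have "A \<subseteq> {..12*g} \<times> {..12*g}"
      proof
        fix a assume "a \<in> A"
        then obtain i j where "a = (i,j)" "(i,j) \<in> A" by (cases a) auto
        then show "a \<in> {..12*g} \<times> {..12*g}" using diagram_arcD[OF d] N by fastforce
      qed
      then show "N \<in> {..12*g} \<and> A \<in> Pow ({..12*g} \<times> {..12*g})" using N by simp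
    qed
  qed simp
  show "\<forall>l. 2 * g \<le> l \<and> l \<le> 6 * g - 2 \<longrightarrow> (\<exists>N A. shadow1 N A \<and> has_genus N A g \<and> card A = l)"
  proof -
    obtain n where "g = Suc n" using assms by (cases g) auto
    then show ?thesis using Ach_range[of n] unfolding Ach_def by simp
  qed
qed


end
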